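(* Let $\mathcal{X}$ be a set, $D \ge 1$, $P\ge 1$ integers, and let $\bar f^1,\ldots,\bar f^P$ be mutually independent zero-mean Gaussian processes on $\mathcal{X}\times\mathbb{R}\times\{1,\ldots,D\}$, each of which satisfies: (i) there is a kernel $\kappa^p_{r}$ on $\mathcal{X}$ such that for each $\tau\in\mathbb{R}$, $\bar f^p(\cdot,\tau,\cdot)\sim\mathcal{GP}(0,\kappa^p_r(r,r')\alpha^p_\tau(d,d'))$ for some kernel $\alpha^p_\tau$ on $\{1,\ldots,D\}$; (ii) for all $\tau,\tau'$, $\bar f^p(\cdot,\tau',\cdot)=\mathcal{A}^p_{\tau\to\tau'}\bar f^p(\cdot,\tau,\cdot)+q^p_{\tau\to\tau'}$ with $(\mathcal{A}^p_{\tau\to\tau'}g)(r,d)=\sum_{j=1}^D[\mathbf{A}^p_{\tau\to\tau'}]_{dj}g(r,j)$ for a real $D\times D$ matrix $\mathbf{A}^p_{\tau\to\tau'}$ and $q^p_{\tau\to\tau'}$ a Gaussian process independent of $\bar f^p(\cdot,\tau,\cdot)$; and such that the kernel of $\bar f^p$ and $\kappa^p_r$ are non-degenerate. Let $\bar f^s:=\sum_{p=1}^P\bar f^p$. Let $\mathcal{T}\subset\mathbb{R}$ be finite and, for each $p$, let $\mathcal{Z}^p_r\subset\mathcal{X}$ be finite. Define $\bar{\mathbf{u}}^p:=\{\bar f^p(r,\tau,d)\mid r\in\mathcal{Z}^p_r,\tau\in\mathcal{T},d\in\{1,\ldots,D\}\}$, $\mathbf{u}^p_\tau:=\{\bar f^p(r,\tau,1)\mid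 r\in\mathcal{Z}^p_r\}$, $\bar{\mathbf{u}}:=\bigcup_{p=1}^P\bar{\mathbf{u}}^p$ and $\mathbf{u}_\tau:=\bigcup_{p=1}^P\mathbf{u}^p_\tau$. For $\tau\in\mathcal{T}$ let $\mathcal{X}_\tau\subset\mathcal{X}$ be finite and $\mathbf{f}^s_\tau:=\{\bar f^s(r,\tau,1)\mid r\in\mathcal{X}_\tau\}$. Then for each $\tau\in\mathcal{T}$, $\mathbf{f}^s_\tau$ is conditionally independent of $\bar{\mathbf{u}}\setminus\mathbf{u}_\tau$ given $\mathbf{u}_\tau$.
   Context: A kernel is non-degenerate if all covariance matrices it produces on finite sets of distinct points are invertible. Each $\bar f^p$ is the state-space augmentation of a space–time separable GP; $\bar f^s$ is then (the augmentation of) a sum-separable GP, i.e. a sum of independent separable GPs. *)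

theory Defs
  imports "HOL-Probability.Probability" "Jordan_Normal_Form.Matrix"
begin

definition gaussian_rv :: "'w measure \<Rightarrow> ('w \<Rightarrow> real) \<Rightarrow> bool" where
  "gaussian_rv M X \<longleftrightarrow> X \<in> borel_measurable M \<and>
     ((\<exists>\<mu>. distr M borel X = return borel \<mu>) \<or>
      (\<exists>\<mu> \<sigma>. \<sigma> > 0 \<and> distributed M lborel X (normal_density \<mu> \<sigma>)))"

definition jointly_gaussian :: "'w measure \<Rightarrow> 'i set \<Rightarrow> ('i \<Rightarrow> 'w \<Rightarrow> real) \<Rightarrow> bool" where
  "jointly_gaussian M I X \<longleftrightarrow> (\<forall>i\<in>I. X i \<in> borel_measurable M) \<and>
     (\<forall>J c. finite J \<and> J \<subseteq> I \<longrightarrow> gaussian_rv M (\<lambda>\<omega>. \<Sum>j\<in>J. c j * X j \<omega>))"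

definition zero_mean_GP :: "'w measure \<Rightarrow> 'i set \<Rightarrow> ('i \<Rightarrow> 'w \<Rightarrow> real) \<Rightarrow> ('i \<Rightarrow> 'i \<Rightarrow> real) \<Rightarrow> bool" where
  "zero_mean_GP M I X k \<longleftrightarrow> jointly_gaussian M I X \<and>
     (\<forall>i\<in>I. integral\<^sup>L M (X i) = 0) \<and>
     (\<forall>i\<in>I. \<forall>j\<in>I. integral\<^sup>L M (\<lambda>\<omega>. X i \<omega> * X j \<omega>) = k i j)"

definition cov_kernel :: "'w measure \<Rightarrow> ('i \<Rightarrow> 'w \<Rightarrow> real) \<Rightarrow> 'i \<Rightarrow> 'i \<Rightarrow> real" where
  "cov_kernel M X i j = integral\<^sup>L M (\<lambda>\<omega>. X i \<omega> * X j \<omega>)"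

definition is_kernel :: "'a set \<Rightarrow> ('a \<Rightarrow> 'a \<Rightarrow> real) \<Rightarrow> bool" where
  "is_kernel S k \<longleftrightarrow> (\<forall>x\<in>S. \<forall>y\<in>S. k x y = k y x) \<and>
     (\<forall>J c. finite J \<and> J \<subseteq> S \<longrightarrow> 0 \<le> (\<Sum>i\<in>J. \<Sum>j\<in>J. c i * c j * k i j))"

definition nondegenerate_kernel :: "'a set \<Rightarrow> ('a \<Rightarrow> 'a \<Rightarrow> real) \<Rightarrow> bool" where
  "nondegenerate_kernel S k \<longleftrightarrow> (\<forall>xs. distinct xs \<and> set xs \<subseteq> S \<longrightarrow>
     invertible_mat (mat (length xs) (length xs) (\<lambda>(i, j). k (xs ! i) (xs ! j))))"

definition gen_sigma :: "'w measure \<Rightarrow> 'i set \<Rightarrow> ('i \<Rightarrow> 'w \<Rightarrow> real) \<Rightarrow> 'w measure" where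
  "gen_sigma M J X = vimage_algebra (space M) (\<lambda>\<omega>. restrict (\<lambda>j. X j \<omega>) J) (PiM J (\<lambda>_. borel))"

definition cond_indep :: "'w measure \<Rightarrow> 'w measure \<Rightarrow> 'w measure \<Rightarrow> 'w measure \<Rightarrow> bool" where
  "cond_indep M F G H \<longleftrightarrow> (\<forall>A\<in>sets F. \<forall>B\<in>sets G. AE \<omega> in M.
      real_cond_exp M H (indicator (A \<inter> B)) \<omega> =
      real_cond_exp M H (indicator A) \<omega> * real_cond_exp M H (indicator B) \<omega>)"

end

theory Submission
  imports Defs
begin

lemma A0:
  fixes \<mu> :: "'a measure" and \<nu> :: "'b measure"
  assumes fm: "finite_measure \<mu>" "finite_measure \<nu>"
    and [measurable]: "W \<in> borel_measurable \<mu>" "W' \<in> borel_measurable \<nu>"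
      "g \<in> borel_measurable \<mu>" "g' \<in> borel_measurable \<nu>"
    and gb: "\<And>x. 0 \<le> g x \<and> g x \<le> 2" "\<And>x. 0 \<le> g' x \<and> g' x \<le> 2"
    and ch: "\<And>s. (CLINT x|\<mu>. g x *\<^sub>R iexp (s * W x)) = (CLINT x|\<nu>. g' x *\<^sub>R iexp (s * W' x))"
    and B: "B \<in> sets borel"
  shows "(\<integral>x. g x * indicator B (W x) \<partial>\<mu>) = (\<integral>x. g' x * indicator B (W' x) \<partial>\<nu>)"
proof -
  interpret m1: finite_measure \<mu> by fact
  note [measurable] = B
  interpret m2: finite_measure \<nu> by fact
  define \<alpha> where "\<alpha> = distr (density \<mu> g) borel W"
  define \<beta> where "\<beta> = distr (density \<nu> g') borel W'"
  have intg: "integrable \<mu> g" 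
    by (rule m1.integrable_const_bound[where B=2]) (use gb in auto)
  have intg': "integrable \<nu> g'" 
    by (rule m2.integrable_const_bound[where B=2]) (use gb in auto)
  have ea: "emeasure \<alpha> A = ennreal (\<integral>x. g x * indicator A (W x) \<partial>\<mu>)" if [measurable]: "A \<in> sets borel" for A
  proof -
    have "emeasure \<alpha> A = (\<integral>\<^sup>+x. ennreal (g x) * indicator (W -` A \<inter> space \<mu>) x \<partial>\<mu>)"
      unfolding \<alpha>_def by (simp add: emeasure_distr emeasure_density)
    also have "\<dots> = (\<integral>\<^sup>+x. ennreal (g x * indicator A (W x)) \<partial>\<mu>)"
      by (intro nn_integral_cong) (auto split: split_indicator)
    also have "\<dots> = ennreal (\<integral>x. g x * indicator A (W x) \<partial>\<mu>)"
      by (rule nn_integral_eq_integral)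
        (auto intro!: m1.integrable_const_bound[where B=2] simp: gb split: split_indicator)
    finally show ?thesis .
  qed
  have eb: "emeasure \<beta> A = ennreal (\<integral>x. g' x * indicator A (W' x) \<partial>\<nu>)" if [measurable]: "A \<in> sets borel" for A
  proof -
    have "emeasure \<beta> A = (\<integral>\<^sup>+x. ennreal (g' x) * indicator (W' -` A \<inter> space \<nu>) x \<partial>\<nu>)"
      unfolding \<beta>_def by (simp add: emeasure_distr emeasure_density)
    also have "\<dots> = (\<integral>\<^sup>+x. ennreal (g' x * indicator A (W' x)) \<partial>\<nu>)"
      by (intro nn_integral_cong) (auto split: split_indicator)
    also have "\<dots> = ennreal (\<integral>x. g' x * indicator A (W' x) \<partial>\<nu>)"
      by (rule nn_integral_eq_integral)
        (auto intro!: m2.integrable_const_bound[where B=2] simp: gb split: split_indicator)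
    finally show ?thesis .
  qed
  have ca: "char \<alpha> s = (CLINT x|\<mu>. g x *\<^sub>R iexp (s * W x))" for s
    unfolding char_def \<alpha>_def
    by (subst integral_distr) (auto simp: integral_density gb)
  have cb: "char \<beta> s = (CLINT x|\<nu>. g' x *\<^sub>R iexp (s * W' x))" for s
    unfolding char_def \<beta>_def
    by (subst integral_distr) (auto simp: integral_density gb)
  have mass: "(\<integral>x. g x \<partial>\<mu>) = (\<integral>x. g' x \<partial>\<nu>)"
    using ch[of 0] by (simp add: scaleR_conv_of_real)
  define m where "m = (\<integral>x. g x \<partial>\<mu>)"
  have m0: "m \<ge> 0" unfolding m_def using gb by (simp add: Bochner_Integration.integral_nonneg)
  have sa: "sets \<alpha> = sets borel" "sets \<beta> = sets borel" unfolding \<alpha>_def \<beta>_def by auto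
  show ?thesis
  proof (cases "m = 0")
    case True
    have "(\<integral>x. g x * indicator B (W x) \<partial>\<mu>) = 0"
    proof -
      have "(\<integral>x. g x * indicator B (W x) \<partial>\<mu>) \<le> m" unfolding m_def
        by (intro integral_mono intg m1.integrable_const_bound[where B=2])
          (auto simp: gb split: split_indicator)
      moreover have "0 \<le> (\<integral>x. g x * indicator B (W x) \<partial>\<mu>)"
        by (rule Bochner_Integration.integral_nonneg) (simp add: gb)
      ultimately show ?thesis using True by simp
    qed
    moreover have "(\<integral>x. g' x * indicator B (W' x) \<partial>\<nu>) = 0"
    proof -
      have "(\<integral>x. g' x * indicator B (W' x) \<partial>\<nu>) \<le> m" unfolding m_def mass
        by (intro integral_mono intg' m2.integrable_const_bound[where B=2])
          (auto simp: gb split: split_indicator)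
      moreover have "0 \<le> (\<integral>x. g' x * indicator B (W' x) \<partial>\<nu>)"
        by (rule Bochner_Integration.integral_nonneg) (simp add: gb)
      ultimately show ?thesis using True by simp
    qed
    ultimately show ?thesis by simp
  next
    case False
    then have mp: "m > 0" using m0 by simp
    define \<alpha>' where "\<alpha>' = density \<alpha> (\<lambda>_. ennreal (1/m))"
    define \<beta>' where "\<beta>' = density \<beta> (\<lambda>_. ennreal (1/m))"
    have ua: "emeasure \<alpha> UNIV = ennreal m"
      using ea[of UNIV] by (simp add: m_def)
    have ub: "emeasure \<beta> UNIV = ennreal m"
      using eb[of UNIV] by (simp add: m_def mass)
    have spa: "space \<alpha> = UNIV" "space \<beta> = UNIV" unfolding \<alpha>_def \<beta>_def by auto
    have ea': "emeasure \<alpha>' A = ennreal (1/m) * emeasure \<alpha> A" if "A \<in> sets borel" for A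
      unfolding \<alpha>'_def using that sa
      by (subst emeasure_density) (auto simp: nn_integral_cmult)
    have eb': "emeasure \<beta>' A = ennreal (1/m) * emeasure \<beta> A" if "A \<in> sets borel" for A
      unfolding \<beta>'_def using that sa
      by (subst emeasure_density) (auto simp: nn_integral_cmult)
    have rda: "real_distribution \<alpha>'"
      unfolding real_distribution_def real_distribution_axioms_def
      using ea'[of UNIV] ua mp sa spa
      by (auto intro!: prob_spaceI simp: \<alpha>'_def ennreal_mult[symmetric])
    have rdb: "real_distribution \<beta>'"
      unfolding real_distribution_def real_distribution_axioms_def
      using eb'[of UNIV] ub mp sa spa
      by (auto intro!: prob_spaceI simp: \<beta>'_def ennreal_mult[symmetric])
    have "char \<alpha>' = char \<beta>'"
    proof
      fix s
      have "char \<alpha>' s = (1/m) *\<^sub>R char \<alpha> s"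
        unfolding char_def \<alpha>'_def using sa m0 by (subst integral_density) auto
      also have "\<dots> = (1/m) *\<^sub>R char \<beta> s" using ca cb ch by simp
      also have "\<dots> = char \<beta>' s"
        unfolding char_def \<beta>'_def using sa m0 by (subst integral_density) auto
      finally show "char \<alpha>' s = char \<beta>' s" .
    qed
    then have "\<alpha>' = \<beta>'" using Levy_uniqueness rda rdb by blast
    then have "ennreal (1/m) * emeasure \<alpha> B = ennreal (1/m) * emeasure \<beta> B"
      using ea' eb' B by metis
    then have "ennreal m * (ennreal (1/m) * emeasure \<alpha> B) = ennreal m * (ennreal (1/m) * emeasure \<beta> B)"
      by simp
    then have "emeasure \<alpha> B = emeasure \<beta> B" using mp
      by (simp add: mult.assoc[symmetric] ennreal_mult[symmetric])
    then have "ennreal (\<integral>x. g x * indicator B (W x) \<partial>\<mu>) = ennreal (\<integral>x. g' x * indicator B (W' x) \<partial>\<nu>)"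
      using ea eb B by simp
    moreover have "0 \<le> (\<integral>x. g x * indicator B (W x) \<partial>\<mu>)" "0 \<le> (\<integral>x. g' x * indicator B (W' x) \<partial>\<nu>)"
      by (rule Bochner_Integration.integral_nonneg, simp add: gb)+
    ultimately show ?thesis by simp
  qed
qed

lemma cint_split:
  fixes \<mu> :: "'a measure"
  assumes "finite_measure \<mu>" and [measurable]: "W \<in> borel_measurable \<mu>" "g \<in> borel_measurable \<mu>"
    and gb: "\<And>x. \<bar>g x\<bar> \<le> 2"
  shows "(CLINT x|\<mu>. g x *\<^sub>R iexp (s * W x)) = Complex (\<integral>x. g x * cos (s * W x) \<partial>\<mu>) (\<integral>x. g x * sin (s * W x) \<partial>\<mu>)"
proof -
  interpret finite_measure \<mu> by fact
  have int: "integrable \<mu> (\<lambda>x. g x *\<^sub>R iexp (s * W x))"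
    by (rule integrable_const_bound[where B=2]) (auto simp: norm_mult gb)
  show ?thesis
    apply (rule complex_eqI)
     apply (subst integral_Re[symmetric], use int in simp, simp add: Re_exp mult.commute)
    apply (subst integral_Im[symmetric], use int in simp, simp add: Im_exp mult.commute)
    done
qed

lemma A0':
  fixes \<mu> :: "'a measure" and \<nu> :: "'b measure"
  assumes fm: "finite_measure \<mu>" "finite_measure \<nu>"
    and [measurable]: "W \<in> borel_measurable \<mu>" "W' \<in> borel_measurable \<nu>"
      "g \<in> borel_measurable \<mu>" "g' \<in> borel_measurable \<nu>"
    and gb: "\<And>x. \<bar>g x\<bar> \<le> 1" "\<And>x. \<bar>g' x\<bar> \<le> 1"
    and ch1: "\<And>s. (CLINT x|\<mu>. iexp (s * W x)) = (CLINT x|\<nu>. iexp (s * W' x))"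
    and ch: "\<And>s. (CLINT x|\<mu>. g x *\<^sub>R iexp (s * W x)) = (CLINT x|\<nu>. g' x *\<^sub>R iexp (s * W' x))"
    and B: "B \<in> sets borel"
  shows "(\<integral>x. g x * indicator B (W x) \<partial>\<mu>) = (\<integral>x. g' x * indicator B (W' x) \<partial>\<nu>)"
proof -
  interpret m1: finite_measure \<mu> by fact
  interpret m2: finite_measure \<nu> by fact
  note [measurable] = B
  have e1: "(\<integral>x. 1 * indicator B (W x) \<partial>\<mu>) = (\<integral>x. (1::real) * indicator B (W' x) \<partial>\<nu>)"
    apply (rule A0[OF fm, where g="\<lambda>_. 1" and g'="\<lambda>_. 1" and W=W and W'=W' and B=B])
    using ch1 B by auto
  have i1: "complex_integrable \<mu> (\<lambda>x. iexp (s * W x))" for s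
    by (rule m1.integrable_const_bound[where B=1]) auto
  have i2: "complex_integrable \<nu> (\<lambda>x. iexp (s * W' x))" for s
    by (rule m2.integrable_const_bound[where B=1]) auto
  have i3: "complex_integrable \<mu> (\<lambda>x. g x *\<^sub>R iexp (s * W x))" for s
    by (rule m1.integrable_const_bound[where B=1]) (auto simp: gb)
  have i4: "complex_integrable \<nu> (\<lambda>x. g' x *\<^sub>R iexp (s * W' x))" for s
    by (rule m2.integrable_const_bound[where B=1]) (auto simp: gb)
  have e2: "(\<integral>x. (1 + g x) * indicator B (W x) \<partial>\<mu>) = (\<integral>x. (1 + g' x) * indicator B (W' x) \<partial>\<nu>)"
  proof (rule A0[OF fm])
    fix s
    have "(CLINT x|\<mu>. (1 + g x) *\<^sub>R iexp (s * W x)) = (CLINT x|\<mu>. iexp (s * W x) + g x *\<^sub>R iexp (s * W x))"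
      by (simp add: scaleR_add_left)
    also have "\<dots> = (CLINT x|\<mu>. iexp (s * W x)) + (CLINT x|\<mu>. g x *\<^sub>R iexp (s * W x))"
      using i1 i3 by (rule Bochner_Integration.integral_add)
    also have "\<dots> = (CLINT x|\<nu>. iexp (s * W' x)) + (CLINT x|\<nu>. g' x *\<^sub>R iexp (s * W' x))"
      using ch1 ch by simp
    also have "\<dots> = (CLINT x|\<nu>. iexp (s * W' x) + g' x *\<^sub>R iexp (s * W' x))"
      using i2 i4 by (rule Bochner_Integration.integral_add[symmetric])
    also have "\<dots> = (CLINT x|\<nu>. (1 + g' x) *\<^sub>R iexp (s * W' x))"
      by (simp add: scaleR_add_left)
    finally show "(CLINT x|\<mu>. (1 + g x) *\<^sub>R iexp (s * W x)) = (CLINT x|\<nu>. (1 + g' x) *\<^sub>R iexp (s * W' x))" .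
  qed (use gb in \<open>auto simp: abs_le_iff, (smt (verit) gb abs_le_iff)+\<close>)
  have j1: "integrable \<mu> (\<lambda>x. indicator B (W x) :: real)"
    by (rule m1.integrable_const_bound[where B=1]) auto
  have j2: "integrable \<nu> (\<lambda>x. indicator B (W' x) :: real)"
    by (rule m2.integrable_const_bound[where B=1]) auto
  have j3: "integrable \<mu> (\<lambda>x. g x * indicator B (W x))"
    by (rule m1.integrable_const_bound[where B=1]) (auto simp: gb abs_mult split: split_indicator)
  have j4: "integrable \<nu> (\<lambda>x. g' x * indicator B (W' x))"
    by (rule m2.integrable_const_bound[where B=1]) (auto simp: gb abs_mult split: split_indicator)
  have "(\<integral>x. (1 + g x) * indicator B (W x) \<partial>\<mu>) = (\<integral>x. indicator B (W x) \<partial>\<mu>) + (\<integral>x. g x * indicator B (W x) \<partial>\<mu>)"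
    by (subst Bochner_Integration.integral_add[OF j1 j3, symmetric]) (simp add: distrib_right)
  moreover have "(\<integral>x. (1 + g' x) * indicator B (W' x) \<partial>\<nu>) = (\<integral>x. indicator B (W' x) \<partial>\<nu>) + (\<integral>x. g' x * indicator B (W' x) \<partial>\<nu>)"
    by (subst Bochner_Integration.integral_add[OF j2 j4, symmetric]) (simp add: distrib_right)
  ultimately show ?thesis using e1 e2 by simp
qed

lemma trig_ints:
  fixes \<mu> :: "'a measure"
  fixes th V :: "'a \<Rightarrow> real"
  assumes "finite_measure \<mu>" and [measurable]: "th \<in> borel_measurable \<mu>" "V \<in> borel_measurable \<mu>"
  shows "(\<integral>x. cos (th x) * cos (V x) \<partial>\<mu>) = ((\<integral>x. cos (th x + V x) \<partial>\<mu>) + (\<integral>x. cos (th x + - V x) \<partial>\<mu>)) / 2"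
    "(\<integral>x. sin (th x) * sin (V x) \<partial>\<mu>) = ((\<integral>x. cos (th x + - V x) \<partial>\<mu>) - (\<integral>x. cos (th x + V x) \<partial>\<mu>)) / 2"
    "(\<integral>x. sin (th x) * cos (V x) \<partial>\<mu>) = ((\<integral>x. sin (th x + V x) \<partial>\<mu>) + (\<integral>x. sin (th x + - V x) \<partial>\<mu>)) / 2"
    "(\<integral>x. cos (th x) * sin (V x) \<partial>\<mu>) = ((\<integral>x. sin (th x + V x) \<partial>\<mu>) - (\<integral>x. sin (th x + - V x) \<partial>\<mu>)) / 2"
proof -
  interpret finite_measure \<mu> by fact
  have ic: "integrable \<mu> (\<lambda>x. cos (th x + c * V x))" for c
    by (rule integrable_const_bound[where B=1]) (simp_all add: abs_cos_le_one)
  have iss: "integrable \<mu> (\<lambda>x. sin (th x + c * V x))" for c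
    by (rule integrable_const_bound[where B=1]) (simp_all add: abs_sin_le_one)
  have ic1: "integrable \<mu> (\<lambda>x. cos (th x + V x))" "integrable \<mu> (\<lambda>x. cos (th x + - V x))"
    using ic[of 1] ic[of "-1"] by simp_all
  have is1: "integrable \<mu> (\<lambda>x. sin (th x + V x))" "integrable \<mu> (\<lambda>x. sin (th x + - V x))"
    using iss[of 1] iss[of "-1"] by simp_all
  show "(\<integral>x. cos (th x) * cos (V x) \<partial>\<mu>) = ((\<integral>x. cos (th x + V x) \<partial>\<mu>) + (\<integral>x. cos (th x + - V x) \<partial>\<mu>)) / 2"
    by (subst Bochner_Integration.integral_add[OF ic1, symmetric], subst integral_divide_zero[symmetric])
       (simp add: cos_add cos_diff mult.commute)
  show "(\<integral>x. sin (th x) * sin (V x) \<partial>\<mu>) = ((\<integral>x. cos (th x + - V x) \<partial>\<mu>) - (\<integral>x. cos (th x + V x) \<partial>\<mu>)) / 2"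
    by (subst Bochner_Integration.integral_diff[OF ic1(2) ic1(1), symmetric], subst integral_divide_zero[symmetric])
       (simp add: cos_add cos_diff mult.commute)
  show "(\<integral>x. sin (th x) * cos (V x) \<partial>\<mu>) = ((\<integral>x. sin (th x + V x) \<partial>\<mu>) + (\<integral>x. sin (th x + - V x) \<partial>\<mu>)) / 2"
    by (subst Bochner_Integration.integral_add[OF is1, symmetric], subst integral_divide_zero[symmetric])
       (simp add: sin_add sin_diff mult.commute)
  show "(\<integral>x. cos (th x) * sin (V x) \<partial>\<mu>) = ((\<integral>x. sin (th x + V x) \<partial>\<mu>) - (\<integral>x. sin (th x + - V x) \<partial>\<mu>)) / 2"
    by (subst Bochner_Integration.integral_diff[OF is1, symmetric], subst integral_divide_zero[symmetric])
       (simp add: sin_add sin_diff mult.commute)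
qed

lemma rect_unique:
  fixes W :: "'i \<Rightarrow> 'a \<Rightarrow> real" and W' :: "'i \<Rightarrow> 'b \<Rightarrow> real" and A :: "'i \<Rightarrow> real set"
  assumes "finite I"
  shows "\<And>(\<mu>::'a measure) (\<nu>::'b measure). finite_measure \<mu> \<Longrightarrow> finite_measure \<nu> \<Longrightarrow>
    (\<forall>j\<in>I. W j \<in> borel_measurable \<mu>) \<Longrightarrow> (\<forall>j\<in>I. W' j \<in> borel_measurable \<nu>) \<Longrightarrow>
    (\<forall>t. (\<integral>\<omega>. cos (\<Sum>j\<in>I. t j * W j \<omega>) \<partial>\<mu>) = (\<integral>\<omega>. cos (\<Sum>j\<in>I. t j * W' j \<omega>) \<partial>\<nu>)) \<Longrightarrow>
    (\<forall>t. (\<integral>\<omega>. sin (\<Sum>j\<in>I. t j * W j \<omega>) \<partial>\<mu>) = (\<integral>\<omega>. sin (\<Sum>j\<in>I. t j * W' j \<omega>) \<partial>\<nu>)) \<Longrightarrow>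
    (\<forall>j\<in>I. A j \<in> sets borel) \<Longrightarrow>
    measure \<mu> {\<omega>\<in>space \<mu>. \<forall>j\<in>I. W j \<omega> \<in> A j} = measure \<nu> {\<omega>\<in>space \<nu>. \<forall>j\<in>I. W' j \<omega> \<in> A j}"
  using assms
proof (induction I)
  case empty
  then show ?case by simp
next
  case (insert i I)
  fix \<mu> :: "'a measure" and \<nu> :: "'b measure"
  assume fm: "finite_measure \<mu>" "finite_measure \<nu>"
    and mW: "\<forall>j\<in>insert i I. W j \<in> borel_measurable \<mu>"
    and mW': "\<forall>j\<in>insert i I. W' j \<in> borel_measurable \<nu>"
    and hc: "\<forall>t. (\<integral>\<omega>. cos (\<Sum>j\<in>insert i I. t j * W j \<omega>) \<partial>\<mu>) = (\<integral>\<omega>. cos (\<Sum>j\<in>insert i I. t j * W' j \<omega>) \<partial>\<nu>)"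
    and hs: "\<forall>t. (\<integral>\<omega>. sin (\<Sum>j\<in>insert i I. t j * W j \<omega>) \<partial>\<mu>) = (\<integral>\<omega>. sin (\<Sum>j\<in>insert i I. t j * W' j \<omega>) \<partial>\<nu>)"
    and hA: "\<forall>j\<in>insert i I. A j \<in> sets borel"
  interpret m1: finite_measure \<mu> by (rule fm)
  interpret m2: finite_measure \<nu> by (rule fm)
  have [measurable]: "W i \<in> borel_measurable \<mu>" "W' i \<in> borel_measurable \<nu>" "A i \<in> sets borel"
    using mW mW' hA by auto
  define S where "S = W i -` A i \<inter> space \<mu>"
  define S' where "S' = W' i -` A i \<inter> space \<nu>"
  have S[measurable]: "S \<in> sets \<mu>" "S' \<in> sets \<nu>" unfolding S_def S'_def by measurable
  define \<mu>B where "\<mu>B = density \<mu> (indicator S)"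
  define \<nu>B where "\<nu>B = density \<nu> (indicator S')"
  have fmB: "finite_measure \<mu>B" "finite_measure \<nu>B"
    unfolding \<mu>B_def \<nu>B_def by (auto intro!: m1.finite_measure_restricted m2.finite_measure_restricted S)
  have intB: "integral\<^sup>L \<mu>B f = (\<integral>x. f x * indicator (A i) (W i x) \<partial>\<mu>)" if [measurable]: "f \<in> borel_measurable \<mu>" for f :: "'a \<Rightarrow> real"
  proof -
    have "integral\<^sup>L \<mu>B f = integral\<^sup>L (density \<mu> (\<lambda>x. ennreal (indicator S x))) f"
      unfolding \<mu>B_def by (simp add: ennreal_indicator)
    also have "\<dots> = (\<integral>x. indicator S x *\<^sub>R f x \<partial>\<mu>)"
      by (rule integral_density) auto
    also have "\<dots> = (\<integral>x. f x * indicator (A i) (W i x) \<partial>\<mu>)"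
      by (rule Bochner_Integration.integral_cong) (auto simp: S_def split: split_indicator)
    finally show ?thesis .
  qed
  have intB': "integral\<^sup>L \<nu>B f = (\<integral>x. f x * indicator (A i) (W' i x) \<partial>\<nu>)" if [measurable]: "f \<in> borel_measurable \<nu>" for f :: "'b \<Rightarrow> real"
  proof -
    have "integral\<^sup>L \<nu>B f = integral\<^sup>L (density \<nu> (\<lambda>x. ennreal (indicator S' x))) f"
      unfolding \<nu>B_def by (simp add: ennreal_indicator)
    also have "\<dots> = (\<integral>x. indicator S' x *\<^sub>R f x \<partial>\<nu>)"
      by (rule integral_density) auto
    also have "\<dots> = (\<integral>x. f x * indicator (A i) (W' i x) \<partial>\<nu>)"
      by (rule Bochner_Integration.integral_cong) (auto simp: S'_def split: split_indicator)
    finally show ?thesis .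
  qed
  have mWI: "\<forall>j\<in>I. W j \<in> borel_measurable \<mu>B" "\<forall>j\<in>I. W' j \<in> borel_measurable \<nu>B"
    using mW mW' unfolding \<mu>B_def \<nu>B_def by (auto cong: measurable_cong_sets)
  have key: "(\<integral>\<omega>. cos (\<Sum>j\<in>I. t j * W j \<omega>) \<partial>\<mu>B) = (\<integral>\<omega>. cos (\<Sum>j\<in>I. t j * W' j \<omega>) \<partial>\<nu>B) \<and>
             (\<integral>\<omega>. sin (\<Sum>j\<in>I. t j * W j \<omega>) \<partial>\<mu>B) = (\<integral>\<omega>. sin (\<Sum>j\<in>I. t j * W' j \<omega>) \<partial>\<nu>B)" for t
  proof -
    define th where "th = (\<lambda>\<omega>. \<Sum>j\<in>I. t j * W j \<omega>)"
    define th' where "th' = (\<lambda>\<omega>. \<Sum>j\<in>I. t j * W' j \<omega>)"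
    have [measurable]: "th \<in> borel_measurable \<mu>" unfolding th_def
      by (intro borel_measurable_sum borel_measurable_times borel_measurable_const) (use mW in auto)
    have [measurable]: "th' \<in> borel_measurable \<nu>" unfolding th'_def
      by (intro borel_measurable_sum borel_measurable_times borel_measurable_const) (use mW' in auto)
    have sumins: "(\<Sum>j\<in>insert i I. (t(i:=s)) j * W j \<omega>) = th \<omega> + s * W i \<omega>" for s \<omega>
    proof -
      have "(\<Sum>j\<in>insert i I. (t(i:=s)) j * W j \<omega>) = s * W i \<omega> + (\<Sum>j\<in>I. (t(i:=s)) j * W j \<omega>)"
        using insert.hyps by simp
      also have "(\<Sum>j\<in>I. (t(i:=s)) j * W j \<omega>) = th \<omega>"
        unfolding th_def using insert.hyps(2) by (intro sum.cong) auto
      finally show ?thesis by simp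
    qed
    have sumins': "(\<Sum>j\<in>insert i I. (t(i:=s)) j * W' j \<omega>) = th' \<omega> + s * W' i \<omega>" for s \<omega>
    proof -
      have "(\<Sum>j\<in>insert i I. (t(i:=s)) j * W' j \<omega>) = s * W' i \<omega> + (\<Sum>j\<in>I. (t(i:=s)) j * W' j \<omega>)"
        using insert.hyps by simp
      also have "(\<Sum>j\<in>I. (t(i:=s)) j * W' j \<omega>) = th' \<omega>"
        unfolding th'_def using insert.hyps(2) by (intro sum.cong) auto
      finally show ?thesis by simp
    qed
    have sum0: "(\<Sum>j\<in>insert i I. ((\<lambda>_. 0)(i:=s)) j * W j \<omega>) = s * W i \<omega>" for s \<omega>
    proof -
      have "(\<Sum>j\<in>insert i I. ((\<lambda>_. 0)(i:=s)) j * W j \<omega>) = s * W i \<omega> + (\<Sum>j\<in>I. ((\<lambda>_. 0)(i:=s)) j * W j \<omega>)"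
        using insert.hyps by simp
      also have "(\<Sum>j\<in>I. ((\<lambda>_. 0)(i:=s)) j * W j \<omega>) = 0"
        using insert.hyps(2) by (intro sum.neutral) auto
      finally show ?thesis by simp
    qed
    have sum0': "(\<Sum>j\<in>insert i I. ((\<lambda>_. 0)(i:=s)) j * W' j \<omega>) = s * W' i \<omega>" for s \<omega>
    proof -
      have "(\<Sum>j\<in>insert i I. ((\<lambda>_. 0)(i:=s)) j * W' j \<omega>) = s * W' i \<omega> + (\<Sum>j\<in>I. ((\<lambda>_. 0)(i:=s)) j * W' j \<omega>)"
        using insert.hyps by simp
      also have "(\<Sum>j\<in>I. ((\<lambda>_. 0)(i:=s)) j * W' j \<omega>) = 0"
        using insert.hyps(2) by (intro sum.neutral) auto
      finally show ?thesis by simp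
    qed
    have hc': "(\<integral>\<omega>. cos (th \<omega> + s * W i \<omega>) \<partial>\<mu>) = (\<integral>\<omega>. cos (th' \<omega> + s * W' i \<omega>) \<partial>\<nu>)" for s
      using hc[rule_format, of "t(i:=s)"] unfolding sumins sumins' .
    have hs': "(\<integral>\<omega>. sin (th \<omega> + s * W i \<omega>) \<partial>\<mu>) = (\<integral>\<omega>. sin (th' \<omega> + s * W' i \<omega>) \<partial>\<nu>)" for s
      using hs[rule_format, of "t(i:=s)"] unfolding sumins sumins' .
    have hc0: "(\<integral>\<omega>. cos (s * W i \<omega>) \<partial>\<mu>) = (\<integral>\<omega>. cos (s * W' i \<omega>) \<partial>\<nu>)" for s
      using hc[rule_format, of "(\<lambda>_. 0)(i:=s)"] unfolding sum0 sum0' .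
    have hs0: "(\<integral>\<omega>. sin (s * W i \<omega>) \<partial>\<mu>) = (\<integral>\<omega>. sin (s * W' i \<omega>) \<partial>\<nu>)" for s
      using hs[rule_format, of "(\<lambda>_. 0)(i:=s)"] unfolding sum0 sum0' .
    have P: "(\<integral>x. cos (th x) * cos (s * W i x) \<partial>\<mu>) = (\<integral>x. cos (th' x) * cos (s * W' i x) \<partial>\<nu>)"
      "(\<integral>x. sin (th x) * sin (s * W i x) \<partial>\<mu>) = (\<integral>x. sin (th' x) * sin (s * W' i x) \<partial>\<nu>)"
      "(\<integral>x. sin (th x) * cos (s * W i x) \<partial>\<mu>) = (\<integral>x. sin (th' x) * cos (s * W' i x) \<partial>\<nu>)"
      "(\<integral>x. cos (th x) * sin (s * W i x) \<partial>\<mu>) = (\<integral>x. cos (th' x) * sin (s * W' i x) \<partial>\<nu>)" for s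
      using trig_ints[OF fm(1), of th "\<lambda>\<omega>. s * W i \<omega>"] trig_ints[OF fm(2), of th' "\<lambda>\<omega>. s * W' i \<omega>"] hc'[of s] hc'[of "-s"] hs'[of s] hs'[of "-s"] by simp_all
    have C1: "(CLINT x|\<mu>. iexp (s * W i x)) = (CLINT x|\<nu>. iexp (s * W' i x))" for s
      using cint_split[OF fm(1), of "W i" "\<lambda>_. 1" s] cint_split[OF fm(2), of "W' i" "\<lambda>_. 1" s] hc0[of s] hs0[of s]
      by simp
    have Cc: "(CLINT x|\<mu>. cos (th x) *\<^sub>R iexp (s * W i x)) = (CLINT x|\<nu>. cos (th' x) *\<^sub>R iexp (s * W' i x))" for s
      using cint_split[OF fm(1), of "W i" "\<lambda>x. cos (th x)" s] cint_split[OF fm(2), of "W' i" "\<lambda>x. cos (th' x)" s] P[of s]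
      by (simp add: abs_cos_le_one order_trans[OF abs_cos_le_one])
    have Cs: "(CLINT x|\<mu>. sin (th x) *\<^sub>R iexp (s * W i x)) = (CLINT x|\<nu>. sin (th' x) *\<^sub>R iexp (s * W' i x))" for s
      using cint_split[OF fm(1), of "W i" "\<lambda>x. sin (th x)" s] cint_split[OF fm(2), of "W' i" "\<lambda>x. sin (th' x)" s] P[of s]
      by (simp add: abs_sin_le_one order_trans[OF abs_sin_le_one])
    have "(\<integral>x. cos (th x) * indicator (A i) (W i x) \<partial>\<mu>) = (\<integral>x. cos (th' x) * indicator (A i) (W' i x) \<partial>\<nu>)"
      by (rule A0'[OF fm, where g="\<lambda>x. cos (th x)" and g'="\<lambda>x. cos (th' x)"])
        (use C1 Cc in \<open>auto simp: abs_cos_le_one\<close>)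
    moreover have "(\<integral>x. sin (th x) * indicator (A i) (W i x) \<partial>\<mu>) = (\<integral>x. sin (th' x) * indicator (A i) (W' i x) \<partial>\<nu>)"
      by (rule A0'[OF fm, where g="\<lambda>x. sin (th x)" and g'="\<lambda>x. sin (th' x)"])
        (use C1 Cs in \<open>auto simp: abs_sin_le_one\<close>)
    moreover have "integral\<^sup>L \<mu>B (\<lambda>\<omega>. cos (th \<omega>)) = (\<integral>x. cos (th x) * indicator (A i) (W i x) \<partial>\<mu>)"
      by (rule intB) measurable
    moreover have "integral\<^sup>L \<nu>B (\<lambda>\<omega>. cos (th' \<omega>)) = (\<integral>x. cos (th' x) * indicator (A i) (W' i x) \<partial>\<nu>)"
      by (rule intB') measurable
    moreover have "integral\<^sup>L \<mu>B (\<lambda>\<omega>. sin (th \<omega>)) = (\<integral>x. sin (th x) * indicator (A i) (W i x) \<partial>\<mu>)"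
      by (rule intB) measurable
    moreover have "integral\<^sup>L \<nu>B (\<lambda>\<omega>. sin (th' \<omega>)) = (\<integral>x. sin (th' x) * indicator (A i) (W' i x) \<partial>\<nu>)"
      by (rule intB') measurable
    ultimately show ?thesis
      unfolding th_def th'_def by simp
  qed
  have IH: "measure \<mu>B {\<omega>\<in>space \<mu>B. \<forall>j\<in>I. W j \<omega> \<in> A j} = measure \<nu>B {\<omega>\<in>space \<nu>B. \<forall>j\<in>I. W' j \<omega> \<in> A j}"
    by (rule insert.IH[OF fmB mWI]) (use key hA in auto)
  have R1: "{\<omega>\<in>space \<mu>. \<forall>j\<in>I. W j \<omega> \<in> A j} \<in> sets \<mu>"
    by (rule sets.sets_Collect_finite_All[OF _ insert.hyps(1)])
       (use mW hA in \<open>auto intro: measurable_sets[unfolded vimage_def Int_def]\<close>)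
  have R2: "{\<omega>\<in>space \<nu>. \<forall>j\<in>I. W' j \<omega> \<in> A j} \<in> sets \<nu>"
    by (rule sets.sets_Collect_finite_All[OF _ insert.hyps(1)])
       (use mW' hA in \<open>auto intro: measurable_sets[unfolded vimage_def Int_def]\<close>)
  have "measure \<mu> {\<omega>\<in>space \<mu>. \<forall>j\<in>insert i I. W j \<omega> \<in> A j} = measure \<mu> (S \<inter> {\<omega>\<in>space \<mu>. \<forall>j\<in>I. W j \<omega> \<in> A j})"
    by (rule arg_cong[where f="measure \<mu>"]) (auto simp: S_def)
  also have "\<dots> = measure \<mu>B {\<omega>\<in>space \<mu>B. \<forall>j\<in>I. W j \<omega> \<in> A j}"
    unfolding \<mu>B_def by (simp add: measure_restricted[OF S(1) R1])
  also have "\<dots> = measure \<nu>B {\<omega>\<in>space \<nu>B. \<forall>j\<in>I. W' j \<omega> \<in> A j}" by (rule IH)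
  also have "\<dots> = measure \<nu> (S' \<inter> {\<omega>\<in>space \<nu>. \<forall>j\<in>I. W' j \<omega> \<in> A j})"
    unfolding \<nu>B_def by (simp add: measure_restricted[OF S(2) R2])
  also have "\<dots> = measure \<nu> {\<omega>\<in>space \<nu>. \<forall>j\<in>insert i I. W' j \<omega> \<in> A j}"
    by (rule arg_cong[where f="measure \<nu>"]) (auto simp: S'_def)
  finally show "measure \<mu> {\<omega>\<in>space \<mu>. \<forall>j\<in>insert i I. W j \<omega> \<in> A j} = measure \<nu> {\<omega>\<in>space \<nu>. \<forall>j\<in>insert i I. W' j \<omega> \<in> A j}" .
qed

lemma gauss_basic:
  fixes S :: "'w \<Rightarrow> real"
  assumes "prob_space M" "gaussian_rv M S"
  shows "integrable M S \<and> integrable M (\<lambda>\<omega>. (S \<omega>)\<^sup>2) \<and>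
    ((\<integral>\<omega>. S \<omega> \<partial>M) = 0 \<longrightarrow> (\<forall>t. (CLINT \<omega>|M. iexp (t * S \<omega>)) = complex_of_real (exp (- (t\<^sup>2 * (\<integral>\<omega>. (S \<omega>)\<^sup>2 \<partial>M)) / 2))))"
proof -
  interpret prob_space M by fact
  have [measurable]: "S \<in> borel_measurable M" using assms(2) by (simp add: gaussian_rv_def)
  consider (deg) c where "distr M borel S = return borel c"
    | (nor) m \<sigma> where "\<sigma> > 0" "distributed M lborel S (normal_density m \<sigma>)"
    using assms(2) unfolding gaussian_rv_def by blast
  then show ?thesis
  proof cases
    case deg
    have "AE x in distr M borel S. x = c"
      unfolding deg by (subst AE_return) auto
    then have ae: "AE \<omega> in M. S \<omega> = c"
      by (rule AE_distrD[rotated]) measurable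
    have i1: "integrable M S"
      using integrable_cong_AE[of S M "\<lambda>_. c"] ae by (auto simp: prob_space)
    have ae2: "AE \<omega> in M. (S \<omega>)\<^sup>2 = c\<^sup>2" using ae by eventually_elim simp
    have i2: "integrable M (\<lambda>\<omega>. (S \<omega>)\<^sup>2)"
      using integrable_cong_AE[of "\<lambda>\<omega>. (S \<omega>)\<^sup>2" M "\<lambda>_. c\<^sup>2"] ae2 by (auto simp: prob_space)
    have "(\<integral>\<omega>. S \<omega> \<partial>M) = c"
      using integral_cong_AE[of S M "\<lambda>_. c"] ae by (auto simp: prob_space)
    moreover have "(\<integral>\<omega>. (S \<omega>)\<^sup>2 \<partial>M) = c\<^sup>2"
      using integral_cong_AE[of "\<lambda>\<omega>. (S \<omega>)\<^sup>2" M "\<lambda>_. c\<^sup>2"] ae2 by (auto simp: prob_space)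
    moreover have "(CLINT \<omega>|M. iexp (t * S \<omega>)) = iexp (t * c)" for t
    proof -
      have "AE \<omega> in M. iexp (t * S \<omega>) = iexp (t * c)" using ae by eventually_elim simp
      then show ?thesis using integral_cong_AE[of "\<lambda>\<omega>. iexp (t * S \<omega>)" M "\<lambda>_. iexp (t * c)"] by (auto simp: prob_space)
    qed
    ultimately show ?thesis using i1 i2 by auto
  next
    case nor
    note D = nor(2)
    have nn: "\<And>x. 0 \<le> normal_density m \<sigma> x" by simp
    have i1: "integrable M S"
      using distributed_integrable[OF D, of "\<lambda>x. x"] integrable_normal_moment_nz_1[of \<sigma> m, OF nor(1)] by simp
    have i2: "integrable M (\<lambda>\<omega>. (S \<omega>)\<^sup>2)"
    proof -
      have "integrable lborel (\<lambda>x. normal_density m \<sigma> x * (x - m)^2)"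
        by (rule integrable_normal_moment) (rule nor(1))
      moreover have "integrable lborel (\<lambda>x. normal_density m \<sigma> x * (x * (2 * m)))"
        using integrable_normal_moment_nz_1[of \<sigma> m, OF nor(1)] by (simp add: mult.assoc[symmetric])
      moreover have "integrable lborel (\<lambda>x. normal_density m \<sigma> x * m\<^sup>2)"
        using nor(1) by simp
      ultimately have "integrable lborel (\<lambda>x. normal_density m \<sigma> x * (x - m)^2 + normal_density m \<sigma> x * (x * (2 * m)) - normal_density m \<sigma> x * m\<^sup>2)"
        by auto
      also have "(\<lambda>x. normal_density m \<sigma> x * (x - m)^2 + normal_density m \<sigma> x * (x * (2 * m)) - normal_density m \<sigma> x * m\<^sup>2)
          = (\<lambda>x. normal_density m \<sigma> x * x\<^sup>2)"
        by (auto simp: power2_eq_square algebra_simps)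
      finally show ?thesis
        using distributed_integrable[OF D, of "\<lambda>x. x\<^sup>2"] by simp
    qed
    have ex: "expectation S = m" using normal_distributed_expectation[OF nor] .
    have var: "variance S = \<sigma>\<^sup>2" using normal_distributed_variance[OF nor] .
    have ch: "(CLINT \<omega>|M. iexp (t * S \<omega>)) = complex_of_real (exp (- (t\<^sup>2 * (\<integral>\<omega>. (S \<omega>)\<^sup>2 \<partial>M)) / 2))"
      if m0: "(\<integral>\<omega>. S \<omega> \<partial>M) = 0" for t
    proof -
      have "m = 0" using ex m0 by simp
      then have sq: "(\<integral>\<omega>. (S \<omega>)\<^sup>2 \<partial>M) = \<sigma>\<^sup>2" using var ex by simp
      have DZ: "distributed M lborel (\<lambda>x. (S x - m) / \<sigma>) std_normal_density"
        using normal_standard_normal_convert[OF nor(1)] D by simp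
      have "(CLINT \<omega>|M. iexp (t * S \<omega>)) = (CLINT \<omega>|M. iexp ((t * \<sigma>) * ((S \<omega> - m) / \<sigma>)))"
        using \<open>m = 0\<close> nor(1) by simp
      also have "\<dots> = (CLINT x|distr M lborel (\<lambda>x. (S x - m) / \<sigma>). iexp ((t * \<sigma>) * x))"
        by (subst integral_distr) (use distributed_measurable[OF DZ] in auto)
      also have "\<dots> = char std_normal_distribution (t * \<sigma>)"
        unfolding char_def distributed_distr_eq_density[OF DZ] by simp
      also have "\<dots> = complex_of_real (exp (- ((t * \<sigma>)\<^sup>2) / 2))"
        by (simp add: char_std_normal_distribution)
      finally show ?thesis using sq by (simp add: power_mult_distrib)
    qed
    show ?thesis using i1 i2 ch by blast
  qed
qed

lemma inv_mat_plain:
  fixes K :: "real mat"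
  assumes "invertible_mat K" "K \<in> carrier_mat n n"
  shows "\<exists>B :: nat \<Rightarrow> nat \<Rightarrow> real. \<forall>k<n. \<forall>j<n. (\<Sum>i<n. B k i * K $$ (i, j)) = (if k = j then 1 else 0)"
proof -
  obtain B where AB: "K * B = 1\<^sub>m (dim_row K)" and BA: "B * K = 1\<^sub>m (dim_row B)"
    using assms(1) unfolding invertible_mat_def inverts_mat_def by blast
  have dK: "dim_row K = n" "dim_col K = n" using assms(2) by auto
  have dB: "dim_col B = n" using arg_cong[OF AB, of dim_col] dK by simp
  have dB2: "dim_row B = n" using arg_cong[OF BA, of dim_col] dK by simp
  show ?thesis
  proof (intro exI allI impI)
    fix k j assume k: "k < n" and j: "j < n"
    have "(B * K) $$ (k, j) = (if k = j then 1 else 0)"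
      using BA dB2 k j by simp
    moreover have "(B * K) $$ (k, j) = (\<Sum>i<n. B $$ (k, i) * K $$ (i, j))"
      using k j dK dB dB2 by (simp add: scalar_prod_def lessThan_atLeast0 row_def col_def)
    ultimately show "(\<Sum>i<n. B $$ (k, i) * K $$ (i, j)) = (if k = j then 1 else 0)" by simp
  qed
qed

lemma proj_weights:
  fixes \<kappa> :: "'x \<Rightarrow> 'x \<Rightarrow> real"
  assumes nd: "nondegenerate_kernel UNIV \<kappa>" and fin: "finite Z"
  shows "\<exists>w. \<forall>z\<in>Z. (\<Sum>z'\<in>Z. w z' * \<kappa> z' z) = \<kappa> r z"
proof -
  obtain xs where xs: "distinct xs" "set xs = Z" using finite_distinct_list[OF fin] by blast
  define n where "n = length xs"
  define K where "K = mat n n (\<lambda>(i, j). \<kappa> (xs ! i) (xs ! j))"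
  have "invertible_mat K" using nd xs unfolding nondegenerate_kernel_def K_def n_def by auto
  moreover have "K \<in> carrier_mat n n" unfolding K_def by simp
  ultimately obtain B :: "nat \<Rightarrow> nat \<Rightarrow> real" where B: "\<And>k j. k < n \<Longrightarrow> j < n \<Longrightarrow> (\<Sum>i<n. B k i * K $$ (i, j)) = (if k = j then 1 else 0)"
    using inv_mat_plain by blast
  have KK: "K $$ (i, j) = \<kappa> (xs ! i) (xs ! j)" if "i < n" "j < n" for i j
    using that unfolding K_def by simp
  define idx where "idx z' = (THE i. i < n \<and> xs ! i = z')" for z'
  have idx: "idx (xs ! i) = i" if "i < n" for i
    unfolding idx_def using that xs(1) n_def by (auto intro!: the_equality simp: nth_eq_iff_index_eq)
  define w where "w z' = (\<Sum>k<n. \<kappa> r (xs ! k) * B k (idx z'))" for z'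
  have reidx: "(\<Sum>z'\<in>Z. F z') = (\<Sum>i<n. F (xs ! i))" for F :: "'x \<Rightarrow> real"
  proof -
    have "inj_on (nth xs) {..<n}" using xs(1) n_def by (simp add: inj_on_nth)
    moreover have "nth xs ` {..<n} = Z" using xs(2) n_def by (auto simp: set_conv_nth)
    ultimately show ?thesis by (metis sum.reindex comp_apply sum.cong)
  qed
  show ?thesis
  proof (intro exI ballI)
    fix z assume "z \<in> Z"
    then obtain j where j: "j < n" "z = xs ! j" using xs(2) n_def by (auto simp: set_conv_nth)
    have "(\<Sum>z'\<in>Z. w z' * \<kappa> z' z) = (\<Sum>i<n. w (xs ! i) * \<kappa> (xs ! i) (xs ! j))"
      by (simp add: reidx j(2))
    also have "\<dots> = (\<Sum>i<n. \<Sum>k<n. \<kappa> r (xs ! k) * B k i * K $$ (i, j))"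
      by (intro sum.cong refl) (simp add: w_def idx KK j sum_distrib_right)
    also have "\<dots> = (\<Sum>k<n. \<kappa> r (xs ! k) * (\<Sum>i<n. B k i * K $$ (i, j)))"
      by (subst sum.swap) (simp add: sum_distrib_left mult.assoc)
    also have "\<dots> = (\<Sum>k<n. \<kappa> r (xs ! k) * (if k = j then 1 else 0))"
      by (intro sum.cong refl) (simp add: B j)
    also have "\<dots> = \<kappa> r z" using j by (simp add: if_distrib cong: if_cong)
    finally show "(\<Sum>z'\<in>Z. w z' * \<kappa> z' z) = \<kappa> r z" .
  qed
qed

lemma PiM_law_eq:
  fixes V :: "'i \<Rightarrow> 'a \<Rightarrow> real" and V' :: "'i \<Rightarrow> 'b \<Rightarrow> real"
  assumes fin: "finite K" and fm: "finite_measure \<mu>" "finite_measure \<nu>"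
    and mV: "\<And>k. k \<in> K \<Longrightarrow> V k \<in> borel_measurable \<mu>"
    and mV': "\<And>k. k \<in> K \<Longrightarrow> V' k \<in> borel_measurable \<nu>"
    and rect: "\<And>A. (\<forall>k\<in>K. A k \<in> sets borel) \<Longrightarrow>
        measure \<mu> {\<omega>\<in>space \<mu>. \<forall>k\<in>K. V k \<omega> \<in> A k} = measure \<nu> {\<omega>\<in>space \<nu>. \<forall>k\<in>K. V' k \<omega> \<in> A k}"
  shows "distr \<mu> (PiM K (\<lambda>_. borel)) (\<lambda>\<omega>. restrict (\<lambda>k. V k \<omega>) K) =
         distr \<nu> (PiM K (\<lambda>_. borel)) (\<lambda>\<omega>. restrict (\<lambda>k. V' k \<omega>) K)"
proof -
  interpret m1: finite_measure \<mu> by fact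
  interpret m2: finite_measure \<nu> by fact
  have m1[measurable]: "(\<lambda>\<omega>. restrict (\<lambda>k. V k \<omega>) K) \<in> measurable \<mu> (PiM K (\<lambda>_. borel))"
    by (rule measurable_restrict) (rule mV)
  have m2[measurable]: "(\<lambda>\<omega>. restrict (\<lambda>k. V' k \<omega>) K) \<in> measurable \<nu> (PiM K (\<lambda>_. borel))"
    by (rule measurable_restrict) (rule mV')
  show ?thesis
  proof (rule measure_eqI_PiM_finite[OF fin])
    fix A :: "'i \<Rightarrow> real set" assume A: "\<And>i. i \<in> K \<Longrightarrow> A i \<in> sets borel"
    have e1: "(\<lambda>\<omega>. restrict (\<lambda>k. V k \<omega>) K) -` Pi\<^sub>E K A \<inter> space \<mu> = {\<omega>\<in>space \<mu>. \<forall>k\<in>K. V k \<omega> \<in> A k}"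
      by auto
    have e2: "(\<lambda>\<omega>. restrict (\<lambda>k. V' k \<omega>) K) -` Pi\<^sub>E K A \<inter> space \<nu> = {\<omega>\<in>space \<nu>. \<forall>k\<in>K. V' k \<omega> \<in> A k}"
      by auto
    have PA: "Pi\<^sub>E K A \<in> sets (PiM K (\<lambda>_. borel))"
      using A by (intro sets_PiM_I_finite fin) auto
    show "emeasure (distr \<mu> (PiM K (\<lambda>_. borel)) (\<lambda>\<omega>. restrict (\<lambda>k. V k \<omega>) K)) (Pi\<^sub>E K A) =
          emeasure (distr \<nu> (PiM K (\<lambda>_. borel)) (\<lambda>\<omega>. restrict (\<lambda>k. V' k \<omega>) K)) (Pi\<^sub>E K A)"
      using rect[of A] A PA
      by (simp add: emeasure_distr e1 e2 m1.emeasure_eq_measure m2.emeasure_eq_measure)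
  next
    show "range (\<lambda>_::nat. space (PiM K (\<lambda>_. borel))) \<subseteq> prod_algebra K (\<lambda>_. borel)"
      using space_in_prod_algebra[of K "\<lambda>_. borel"] by (auto simp: space_PiM)
    show "(\<Union>i::nat. space (PiM K (\<lambda>_. borel))) = space (PiM K (\<lambda>_. borel))" by simp
    show "emeasure (distr \<mu> (PiM K (\<lambda>_. borel)) (\<lambda>\<omega>. restrict (\<lambda>k. V k \<omega>) K)) (space (PiM K (\<lambda>_. borel))) \<noteq> \<infinity>" for i :: nat
      by (simp add: emeasure_distr)
  qed simp_all
qed

lemma freeze_cond_indep:
  fixes M :: "'w measure" and ev :: "'w \<Rightarrow> 'e" and wv :: "'w \<Rightarrow> 'v"
    and zf :: "'v \<Rightarrow> 'z" and yf :: "'v \<Rightarrow> 'y" and \<Phi> :: "'e \<Rightarrow> 'z \<Rightarrow> 'r"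
  assumes ps: "prob_space M"
    and mev[measurable]: "ev \<in> measurable M N1" and mwv[measurable]: "wv \<in> measurable M N2"
    and mzf[measurable]: "zf \<in> measurable N2 N3" and myf[measurable]: "yf \<in> measurable N2 N4"
    and m\<Phi>[measurable]: "(\<lambda>p. \<Phi> (fst p) (snd p)) \<in> measurable (N1 \<Otimes>\<^sub>M N3) N5"
    and ind: "distr M (N1 \<Otimes>\<^sub>M N2) (\<lambda>\<omega>. (ev \<omega>, wv \<omega>)) =
              distr (M \<Otimes>\<^sub>M M) (N1 \<Otimes>\<^sub>M N2) (\<lambda>p. (ev (fst p), wv (snd p)))"
  shows "cond_indep M (vimage_algebra (space M) (\<lambda>\<omega>. \<Phi> (ev \<omega>) (zf (wv \<omega>))) N5)
           (vimage_algebra (space M) (\<lambda>\<omega>. yf (wv \<omega>)) N4)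
           (vimage_algebra (space M) (\<lambda>\<omega>. zf (wv \<omega>)) N3)"
proof -
  interpret prob_space M by (rule ps)
  define H where "H = vimage_algebra (space M) (\<lambda>\<omega>. zf (wv \<omega>)) N3"
  have fZ: "(\<lambda>\<omega>. zf (wv \<omega>)) \<in> space M \<rightarrow> space N3"
    using measurable_space[OF measurable_compose[OF mwv mzf]] by auto
  have fY: "(\<lambda>\<omega>. yf (wv \<omega>)) \<in> space M \<rightarrow> space N4"
    using measurable_space[OF measurable_compose[OF mwv myf]] by auto
  have mX: "(\<lambda>\<omega>. \<Phi> (ev \<omega>) (zf (wv \<omega>))) \<in> measurable M N5"
    using measurable_compose[OF measurable_Pair[OF mev measurable_compose[OF mwv mzf]] m\<Phi>] by simp
  have fX: "(\<lambda>\<omega>. \<Phi> (ev \<omega>) (zf (wv \<omega>))) \<in> space M \<rightarrow> space N5"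
    using measurable_space[OF mX] by auto
  have setsH: "sets H = {(\<lambda>\<omega>. zf (wv \<omega>)) -` S \<inter> space M | S. S \<in> sets N3}"
    unfolding H_def by (rule sets_vimage_algebra2[OF fZ])
  have subH: "subalgebra M H"
    unfolding subalgebra_def H_def using setsH[unfolded H_def] 
    by (auto intro: measurable_sets[OF measurable_compose[OF mwv mzf]])
  interpret sigma_finite_subalgebra M H
    by (rule finite_measure_subalgebra_is_sigma_finite) (unfold_locales, rule subH)
  have mZH: "(\<lambda>\<omega>. zf (wv \<omega>)) \<in> measurable H N3"
    unfolding H_def by (rule measurable_vimage_algebra1[OF fZ])
  show ?thesis
    unfolding cond_indep_def H_def[symmetric]
  proof (intro ballI)
    fix A B
    assume "A \<in> sets (vimage_algebra (space M) (\<lambda>\<omega>. \<Phi> (ev \<omega>) (zf (wv \<omega>))) N5)"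
    then obtain Q where Q[measurable]: "Q \<in> sets N5" and A: "A = (\<lambda>\<omega>. \<Phi> (ev \<omega>) (zf (wv \<omega>))) -` Q \<inter> space M"
      using sets_vimage_algebra2[OF fX] by auto
    assume "B \<in> sets (vimage_algebra (space M) (\<lambda>\<omega>. yf (wv \<omega>)) N4)"
    then obtain U where U[measurable]: "U \<in> sets N4" and B: "B = (\<lambda>\<omega>. yf (wv \<omega>)) -` U \<inter> space M"
      using sets_vimage_algebra2[OF fY] by auto
    have A_M[measurable]: "A \<in> sets M" unfolding A using mX Q by (rule measurable_sets)
    have B_M[measurable]: "B \<in> sets M" unfolding B using measurable_compose[OF mwv myf] U by (rule measurable_sets)
    define hh where "hh z = (\<integral>\<omega>. indicator Q (\<Phi> (ev \<omega>) z) \<partial>M :: real)" for z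
    have mhh: "hh \<in> borel_measurable N3"
    proof -
      have "(\<lambda>p. (ev (snd p), fst p)) \<in> measurable (N3 \<Otimes>\<^sub>M M) (N1 \<Otimes>\<^sub>M N3)" by measurable
      from measurable_compose[OF this m\<Phi>]
      have "(\<lambda>p. \<Phi> (ev (snd p)) (fst p)) \<in> measurable (N3 \<Otimes>\<^sub>M M) N5" by simp
      then have "(\<lambda>p. indicator Q (\<Phi> (ev (snd p)) (fst p)) :: real) \<in> borel_measurable (N3 \<Otimes>\<^sub>M M)"
        by measurable
      then have "case_prod (\<lambda>z \<omega>. indicator Q (\<Phi> (ev \<omega>) z) :: real) \<in> borel_measurable (N3 \<Otimes>\<^sub>M M)"
        by (simp add: case_prod_beta')
      then show ?thesis unfolding hh_def by (rule borel_measurable_lebesgue_integral)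
    qed
    have hhb: "0 \<le> hh z \<and> hh z \<le> 1" if z: "z \<in> space N3" for z
    proof -
      have "(\<lambda>\<omega>. (ev \<omega>, z)) \<in> measurable M (N1 \<Otimes>\<^sub>M N3)"
        using z by (intro measurable_Pair mev measurable_const)
      from measurable_compose[OF this m\<Phi>]
      have [measurable]: "(\<lambda>\<omega>. \<Phi> (ev \<omega>) z) \<in> measurable M N5" by simp
      have "hh z \<le> (\<integral>\<omega>. 1 \<partial>M)" unfolding hh_def
        by (intro integral_mono integrable_const_bound[where B=1])
           (auto split: split_indicator)
      moreover have "0 \<le> hh z" unfolding hh_def by (rule Bochner_Integration.integral_nonneg) simp
      ultimately show ?thesis by (simp add: prob_space)
    qed
    have hhZ: "0 \<le> hh (zf (wv \<omega>)) \<and> hh (zf (wv \<omega>)) \<le> 1" if "\<omega> \<in> space M" for \<omega>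
      using hhb fZ that by auto
    have mhhZ[measurable]: "(\<lambda>\<omega>. hh (zf (wv \<omega>))) \<in> borel_measurable H"
      using measurable_compose[OF mZH mhh] .
    have mhhZM[measurable]: "(\<lambda>\<omega>. hh (zf (wv \<omega>))) \<in> borel_measurable M"
      using measurable_compose[OF measurable_compose[OF mwv mzf] mhh] .
    have K: "(\<integral>\<omega>. indicator Q (\<Phi> (ev \<omega>) (zf (wv \<omega>))) * indicator R (wv \<omega>) \<partial>M) =
             (\<integral>\<omega>. hh (zf (wv \<omega>)) * indicator R (wv \<omega>) \<partial>M)" if R[measurable]: "R \<in> sets N2" for R
    proof -
      define \<phi> where "\<phi> p = (indicator Q (\<Phi> (fst p) (zf (snd p))) * indicator R (snd p) :: real)" for p
      have "(\<lambda>p. (fst p, zf (snd p))) \<in> measurable (N1 \<Otimes>\<^sub>M N2) (N1 \<Otimes>\<^sub>M N3)" by measurable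
      from measurable_compose[OF this m\<Phi>]
      have "(\<lambda>p. \<Phi> (fst p) (zf (snd p))) \<in> measurable (N1 \<Otimes>\<^sub>M N2) N5" by simp
      then have m\<phi>[measurable]: "\<phi> \<in> borel_measurable (N1 \<Otimes>\<^sub>M N2)"
        unfolding \<phi>_def by measurable
      interpret pp: pair_prob_space M M by unfold_locales
      have "(\<integral>\<omega>. indicator Q (\<Phi> (ev \<omega>) (zf (wv \<omega>))) * indicator R (wv \<omega>) \<partial>M) = (\<integral>\<omega>. \<phi> (ev \<omega>, wv \<omega>) \<partial>M)"
        unfolding \<phi>_def by simp
      also have "\<dots> = integral\<^sup>L (distr M (N1 \<Otimes>\<^sub>M N2) (\<lambda>\<omega>. (ev \<omega>, wv \<omega>))) \<phi>"
        by (subst integral_distr) auto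
      also have "\<dots> = integral\<^sup>L (distr (M \<Otimes>\<^sub>M M) (N1 \<Otimes>\<^sub>M N2) (\<lambda>p. (ev (fst p), wv (snd p)))) \<phi>"
        by (simp add: ind)
      also have "\<dots> = (\<integral>p. \<phi> (ev (fst p), wv (snd p)) \<partial>(M \<Otimes>\<^sub>M M))"
        by (subst integral_distr) auto
      also have "\<dots> = (\<integral>\<omega>2. (\<integral>\<omega>1. \<phi> (ev \<omega>1, wv \<omega>2) \<partial>M) \<partial>M)"
      proof -
        have int: "integrable (M \<Otimes>\<^sub>M M) (case_prod (\<lambda>\<omega>1 \<omega>2. \<phi> (ev \<omega>1, wv \<omega>2)))"
        proof (rule pp.P.integrable_const_bound[where B=1])
          have "(\<lambda>p. \<phi> (ev (fst p), wv (snd p))) \<in> borel_measurable (M \<Otimes>\<^sub>M M)" by measurable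
          then show "case_prod (\<lambda>\<omega>1 \<omega>2. \<phi> (ev \<omega>1, wv \<omega>2)) \<in> borel_measurable (M \<Otimes>\<^sub>M M)"
            by (simp add: case_prod_beta')
        qed (auto simp: \<phi>_def split: split_indicator)
        show ?thesis using pp.integral_snd[OF int] by (simp add: case_prod_beta')
      qed
      also have "\<dots> = (\<integral>\<omega>2. hh (zf (wv \<omega>2)) * indicator R (wv \<omega>2) \<partial>M)"
        unfolding \<phi>_def hh_def by simp
      finally show ?thesis .
    qed
    have setint: "(\<integral>x\<in>C. f x \<partial>M) = (\<integral>x. indicator C x * f x \<partial>M)" for C and f :: "'w \<Rightarrow> real"
      by (simp add: set_lebesgue_integral_def)
    have Hset: "\<exists>R\<in>sets N2. \<forall>\<omega>\<in>space M. indicator C \<omega> = (indicator R (wv \<omega>) :: real)" if CH: "C \<in> sets H" for C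
    proof -
      obtain S where S: "S \<in> sets N3" "C = (\<lambda>\<omega>. zf (wv \<omega>)) -` S \<inter> space M" using CH setsH by auto
      show ?thesis
        by (rule bexI[of _ "zf -` S \<inter> space N2"])
           (use S measurable_space[OF mwv] in \<open>auto split: split_indicator intro: measurable_sets[OF mzf]\<close>)
    qed
    have c1: "AE \<omega> in M. real_cond_exp M H (indicator A) \<omega> = hh (zf (wv \<omega>))"
    proof (rule real_cond_exp_charact)
      fix C assume C: "C \<in> sets H"
      then obtain R where R: "R \<in> sets N2" "\<forall>\<omega>\<in>space M. indicator C \<omega> = (indicator R (wv \<omega>) :: real)"
        using Hset by blast
      have "(\<integral>x\<in>C. (indicator A x :: real) \<partial>M) = (\<integral>\<omega>. indicator Q (\<Phi> (ev \<omega>) (zf (wv \<omega>))) * indicator R (wv \<omega>) \<partial>M)"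
        unfolding setint by (rule Bochner_Integration.integral_cong) (auto simp: R(2) A split: split_indicator)
      also have "\<dots> = (\<integral>\<omega>. hh (zf (wv \<omega>)) * indicator R (wv \<omega>) \<partial>M)" by (rule K[OF R(1)])
      also have "\<dots> = (\<integral>x\<in>C. hh (zf (wv x)) \<partial>M)"
        unfolding setint by (rule Bochner_Integration.integral_cong) (auto simp: R(2))
      finally show "(\<integral>x\<in>C. indicator A x \<partial>M) = (\<integral>x\<in>C. hh (zf (wv x)) \<partial>M)" .
    next
      show "integrable M (indicator A :: 'w \<Rightarrow> real)" by (rule integrable_const_bound[where B=1]) auto
      show "integrable M (\<lambda>\<omega>. hh (zf (wv \<omega>)))"
        by (rule integrable_const_bound[where B=1]) (auto simp: hhZ abs_le_iff dest: hhZ)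
    qed (rule mhhZ)
    have intB: "integrable M (\<lambda>\<omega>. hh (zf (wv \<omega>)) * indicator B \<omega>)"
      by (rule integrable_const_bound[where B=1]) (auto simp: hhZ abs_mult dest: hhZ split: split_indicator)
    have c2: "AE \<omega> in M. real_cond_exp M H (indicator (A \<inter> B)) \<omega> = hh (zf (wv \<omega>)) * real_cond_exp M H (indicator B) \<omega>"
    proof (rule real_cond_exp_charact)
      fix C assume C: "C \<in> sets H"
      then obtain R where R: "R \<in> sets N2" "\<forall>\<omega>\<in>space M. indicator C \<omega> = (indicator R (wv \<omega>) :: real)"
        using Hset by blast
      have CM[measurable]: "C \<in> sets M" using C subH by (auto simp: subalgebra_def)
      have R': "R \<inter> (yf -` U \<inter> space N2) \<in> sets N2"
        using R(1) measurable_sets[OF myf U] by auto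
      have "(\<integral>x\<in>C. (indicator (A \<inter> B) x :: real) \<partial>M) = (\<integral>\<omega>. indicator Q (\<Phi> (ev \<omega>) (zf (wv \<omega>))) * indicator (R \<inter> (yf -` U \<inter> space N2)) (wv \<omega>) \<partial>M)"
        unfolding setint by (rule Bochner_Integration.integral_cong)
          (use measurable_space[OF mwv] in \<open>auto simp: R(2) A B split: split_indicator\<close>)
      also have "\<dots> = (\<integral>\<omega>. hh (zf (wv \<omega>)) * indicator (R \<inter> (yf -` U \<inter> space N2)) (wv \<omega>) \<partial>M)"
        by (rule K[OF R'])
      also have "\<dots> = (\<integral>\<omega>. (indicator C \<omega> * hh (zf (wv \<omega>))) * indicator B \<omega> \<partial>M)"
        by (rule Bochner_Integration.integral_cong)
          (use measurable_space[OF mwv] in \<open>auto simp: R(2) B split: split_indicator\<close>)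
      also have "\<dots> = (\<integral>\<omega>. (indicator C \<omega> * hh (zf (wv \<omega>))) * real_cond_exp M H (indicator B) \<omega> \<partial>M)"
      proof (rule real_cond_exp_intg(2)[symmetric])
        show "integrable M (\<lambda>\<omega>. indicator C \<omega> * hh (zf (wv \<omega>)) * indicator B \<omega>)"
          by (rule integrable_const_bound[where B=1]) (auto simp: hhZ abs_mult dest: hhZ split: split_indicator)
        show "(\<lambda>\<omega>. indicator C \<omega> * hh (zf (wv \<omega>))) \<in> borel_measurable H"
          using C by measurable
      qed simp
      also have "\<dots> = (\<integral>x\<in>C. hh (zf (wv x)) * real_cond_exp M H (indicator B) x \<partial>M)"
        unfolding setint by (simp add: mult.assoc)
      finally show "(\<integral>x\<in>C. indicator (A \<inter> B) x \<partial>M) = (\<integral>x\<in>C. hh (zf (wv x)) * real_cond_exp M H (indicator B) x \<partial>M)" .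
    next
      show "integrable M (indicator (A \<inter> B) :: 'w \<Rightarrow> real)" by (rule integrable_const_bound[where B=1]) auto
      show "integrable M (\<lambda>\<omega>. hh (zf (wv \<omega>)) * real_cond_exp M H (indicator B) \<omega>)"
        by (rule real_cond_exp_intg(1)) (use intB in auto)
      show "(\<lambda>\<omega>. hh (zf (wv \<omega>)) * real_cond_exp M H (indicator B) \<omega>) \<in> borel_measurable H"
        by measurable
    qed
    show "AE \<omega> in M. real_cond_exp M H (indicator (A \<inter> B)) \<omega> =
            real_cond_exp M H (indicator A) \<omega> * real_cond_exp M H (indicator B) \<omega>"
      using c1 c2 by eventually_elim simp
  qed
qed

definition lin :: "('i \<Rightarrow> 'w \<Rightarrow> real) \<Rightarrow> 'i set \<Rightarrow> ('w \<Rightarrow> real) \<Rightarrow> bool" where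
  "lin X I g \<longleftrightarrow> (\<exists>J c. finite J \<and> J \<subseteq> I \<and> (\<forall>\<omega>. g \<omega> = (\<Sum>j\<in>J. c j * X j \<omega>)))"

lemma lin_base: "i \<in> I \<Longrightarrow> lin X I (X i)"
  unfolding lin_def by (intro exI[of _ "{i}"] exI[of _ "\<lambda>_. 1"]) auto

lemma lin_zero: "lin X I (\<lambda>_. 0)"
  unfolding lin_def by (intro exI[of _ "{}"]) auto

lemma lin_add:
  assumes "lin X I g" "lin X I h" shows "lin X I (\<lambda>\<omega>. g \<omega> + h \<omega>)"
proof -
  obtain J1 c1 where 1: "finite J1" "J1 \<subseteq> I" "\<And>\<omega>. g \<omega> = (\<Sum>j\<in>J1. c1 j * X j \<omega>)"
    using assms(1) unfolding lin_def by blast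
  obtain J2 c2 where 2: "finite J2" "J2 \<subseteq> I" "\<And>\<omega>. h \<omega> = (\<Sum>j\<in>J2. c2 j * X j \<omega>)"
    using assms(2) unfolding lin_def by blast
  define c where "c j = (if j \<in> J1 then c1 j else 0) + (if j \<in> J2 then c2 j else 0)" for j
  have s1: "(\<Sum>j\<in>J1 \<union> J2. (if j \<in> J1 then c1 j else 0) * X j \<omega>) = (\<Sum>j\<in>J1. c1 j * X j \<omega>)" for \<omega>
    using 1(1) 2(1) by (intro sum.mono_neutral_cong_right) auto
  have s2: "(\<Sum>j\<in>J1 \<union> J2. (if j \<in> J2 then c2 j else 0) * X j \<omega>) = (\<Sum>j\<in>J2. c2 j * X j \<omega>)" for \<omega>
    using 1(1) 2(1) by (intro sum.mono_neutral_cong_right) auto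
  show ?thesis
    unfolding lin_def
  proof (intro exI[of _ "J1 \<union> J2"] exI[of _ c] conjI allI)
    fix \<omega>
    show "g \<omega> + h \<omega> = (\<Sum>j\<in>J1 \<union> J2. c j * X j \<omega>)"
      unfolding c_def distrib_right sum.distrib s1 s2 1(3) 2(3) ..
  qed (use 1 2 in auto)
qed

lemma lin_scale:
  assumes "lin X I g" shows "lin X I (\<lambda>\<omega>. a * g \<omega>)"
proof -
  obtain J c where 1: "finite J" "J \<subseteq> I" "\<And>\<omega>. g \<omega> = (\<Sum>j\<in>J. c j * X j \<omega>)"
    using assms(1) unfolding lin_def by blast
  show ?thesis unfolding lin_def
    by (intro exI[of _ J] exI[of _ "\<lambda>j. a * c j"]) (auto simp: 1 sum_distrib_left mult.assoc)
qed

lemma lin_sum: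
  assumes "finite S" "\<And>s. s \<in> S \<Longrightarrow> lin X I (g s)" shows "lin X I (\<lambda>\<omega>. \<Sum>s\<in>S. g s \<omega>)"
  using assms by (induction S rule: finite_induct) (auto intro: lin_zero lin_add)

lemma lin_diff:
  assumes "lin X I g" "lin X I h" shows "lin X I (\<lambda>\<omega>. g \<omega> - h \<omega>)"
  using lin_add[OF assms(1) lin_scale[OF assms(2), of "-1"]] by simp

lemma lin_cong: "lin X I g \<Longrightarrow> (\<And>\<omega>. g \<omega> = h \<omega>) \<Longrightarrow> lin X I h"
proof -
  assume "lin X I g" "\<And>\<omega>. g \<omega> = h \<omega>"
  then have "g = h" by auto
  then show "lin X I h" using \<open>lin X I g\<close> by simp
qed

lemma lin_meas:
  assumes "\<And>i. i \<in> I \<Longrightarrow> X i \<in> borel_measurable M" "lin X I g"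
  shows "\<exists>G\<in>borel_measurable (PiM I (\<lambda>_. borel)). \<forall>\<omega>. g \<omega> = G (restrict (\<lambda>i. X i \<omega>) I)"
proof -
  obtain J c where 1: "finite J" "J \<subseteq> I" "\<And>\<omega>. g \<omega> = (\<Sum>j\<in>J. c j * X j \<omega>)"
    using assms(2) unfolding lin_def by blast
  show ?thesis
  proof (intro bexI[of _ "\<lambda>v. \<Sum>j\<in>J. c j * v j"] allI)
    show "(\<lambda>v. \<Sum>j\<in>J. c j * v j) \<in> borel_measurable (PiM I (\<lambda>_. borel))"
      using 1(2) by (intro borel_measurable_sum borel_measurable_times borel_measurable_const
          measurable_component_singleton) auto
    fix \<omega> show "g \<omega> = (\<Sum>j\<in>J. c j * restrict (\<lambda>i. X i \<omega>) I j)"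
      using 1 by (auto intro!: sum.cong)
  qed
qed

lemma lin_measurable:
  assumes "\<And>i. i \<in> I \<Longrightarrow> X i \<in> borel_measurable M" "lin X I g"
  shows "g \<in> borel_measurable M"
proof -
  obtain J c where 1: "finite J" "J \<subseteq> I" "\<And>\<omega>. g \<omega> = (\<Sum>j\<in>J. c j * X j \<omega>)"
    using assms(2) unfolding lin_def by blast
  have "g = (\<lambda>\<omega>. \<Sum>j\<in>J. c j * X j \<omega>)" using 1 by auto
  also have "\<dots> \<in> borel_measurable M"
    using 1(2) assms(1) by (intro borel_measurable_sum borel_measurable_times borel_measurable_const) auto
  finally show ?thesis .
qed

lemma lin_gauss:
  assumes "jointly_gaussian M I X" "lin X I g" shows "gaussian_rv M g"
proof -
  obtain J c where 1: "finite J" "J \<subseteq> I" "\<And>\<omega>. g \<omega> = (\<Sum>j\<in>J. c j * X j \<omega>)"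
    using assms(2) unfolding lin_def by blast
  have "g = (\<lambda>\<omega>. \<Sum>j\<in>J. c j * X j \<omega>)" using 1 by auto
  then show ?thesis using assms(1) 1 unfolding jointly_gaussian_def by auto
qed

lemma lin_props:
  assumes ps: "prob_space M" and jg: "jointly_gaussian M I X" and m0: "\<And>i. i \<in> I \<Longrightarrow> (\<integral>\<omega>. X i \<omega> \<partial>M) = 0"
    and g: "lin X I g"
  shows "g \<in> borel_measurable M" "integrable M g" "integrable M (\<lambda>\<omega>. (g \<omega>)\<^sup>2)" "(\<integral>\<omega>. g \<omega> \<partial>M) = 0"
    "(CLINT \<omega>|M. iexp (t * g \<omega>)) = complex_of_real (exp (- (t\<^sup>2 * (\<integral>\<omega>. (g \<omega>)\<^sup>2 \<partial>M)) / 2))"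
proof -
  have mX: "\<And>i. i \<in> I \<Longrightarrow> X i \<in> borel_measurable M" using jg unfolding jointly_gaussian_def by auto
  show "g \<in> borel_measurable M" by (rule lin_measurable[OF mX g])
  have iX: "integrable M (X i)" if "i \<in> I" for i
    using gauss_basic[OF ps lin_gauss[OF jg lin_base[OF that]]] by simp
  obtain J c where 1: "finite J" "J \<subseteq> I" "\<And>\<omega>. g \<omega> = (\<Sum>j\<in>J. c j * X j \<omega>)"
    using g unfolding lin_def by blast
  have "(\<integral>\<omega>. g \<omega> \<partial>M) = (\<integral>\<omega>. (\<Sum>j\<in>J. c j * X j \<omega>) \<partial>M)" using 1 by simp
  also have "\<dots> = (\<Sum>j\<in>J. c j * (\<integral>\<omega>. X j \<omega> \<partial>M))"
    using 1 iX by (subst Bochner_Integration.integral_sum) auto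
  also have "\<dots> = 0" using 1(2) m0 by (intro sum.neutral) (auto simp: subset_iff)
  finally show z: "(\<integral>\<omega>. g \<omega> \<partial>M) = 0" .
  note gb = gauss_basic[OF ps lin_gauss[OF jg g]]
  show "integrable M g" "integrable M (\<lambda>\<omega>. (g \<omega>)\<^sup>2)" using gb by auto
  show "(CLINT \<omega>|M. iexp (t * g \<omega>)) = complex_of_real (exp (- (t\<^sup>2 * (\<integral>\<omega>. (g \<omega>)\<^sup>2 \<partial>M)) / 2))"
    using gb z by auto
qed

lemma sq_int_prod:
  fixes a b :: "'w \<Rightarrow> real"
  assumes "integrable M (\<lambda>\<omega>. (a \<omega>)\<^sup>2)" "integrable M (\<lambda>\<omega>. (b \<omega>)\<^sup>2)"
    "a \<in> borel_measurable M" "b \<in> borel_measurable M"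
  shows "integrable M (\<lambda>\<omega>. a \<omega> * b \<omega>)"
proof (rule Bochner_Integration.integrable_bound)
  show "integrable M (\<lambda>\<omega>. (a \<omega>)\<^sup>2 + (b \<omega>)\<^sup>2)" using assms by auto
  show "(\<lambda>\<omega>. a \<omega> * b \<omega>) \<in> borel_measurable M" using assms by auto
  have "\<bar>x * y\<bar> \<le> x\<^sup>2 + y\<^sup>2" for x y :: real
  proof -
    have "0 \<le> (\<bar>x\<bar> - \<bar>y\<bar>)\<^sup>2" by simp
    moreover have "(\<bar>x\<bar> - \<bar>y\<bar>)\<^sup>2 = x\<^sup>2 + y\<^sup>2 - 2 * (\<bar>x\<bar> * \<bar>y\<bar>)"
      by (simp add: power2_eq_square algebra_simps)
    moreover have "0 \<le> \<bar>x\<bar> * \<bar>y\<bar>" by simp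
    ultimately have "\<bar>x\<bar> * \<bar>y\<bar> \<le> x\<^sup>2 + y\<^sup>2" by linarith
    then show ?thesis by (simp add: abs_mult)
  qed
  then show "AE \<omega> in M. norm (a \<omega> * b \<omega>) \<le> norm ((a \<omega>)\<^sup>2 + (b \<omega>)\<^sup>2)" by auto
qed

lemma cov_zero:
  fixes f :: "'x \<times> real \<times> nat \<Rightarrow> 'w \<Rightarrow> real" and M :: "'w measure"
  assumes ps: "prob_space M" and D1: "1 \<le> D"
    and jg: "jointly_gaussian M (UNIV \<times> UNIV \<times> {1..D}) f"
    and m0: "\<forall>i\<in>UNIV \<times> UNIV \<times> {1..D}. integral\<^sup>L M (f i) = 0"
    and gp: "zero_mean_GP M (UNIV \<times> {1..D}) (\<lambda>(r, d). f (r, \<tau>, d)) (\<lambda>(r, d) (r', d'). \<kappa> r r' * \<alpha> d d')"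
    and fin: "finite Z" and wt: "\<forall>z\<in>Z. (\<Sum>z'\<in>Z. w z' * \<kappa> z' z) = \<kappa> r z"
    and tr: "\<exists>(A :: nat \<Rightarrow> nat \<Rightarrow> real) (q :: 'x \<times> nat \<Rightarrow> 'w \<Rightarrow> real).
                jointly_gaussian M (UNIV \<times> {1..D}) q \<and>
                prob_space.indep_var M
                  (PiM (UNIV \<times> {1..D}) (\<lambda>_. borel)) (\<lambda>\<omega>. restrict (\<lambda>i. q i \<omega>) (UNIV \<times> {1..D}))
                  (PiM (UNIV \<times> {1..D}) (\<lambda>_. borel))
                  (\<lambda>\<omega>. restrict (\<lambda>(r, d). f (r, \<tau>, d) \<omega>) (UNIV \<times> {1..D})) \<and>
                (\<forall>r. \<forall>d\<in>{1..D}. AE \<omega> in M.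
                   f (r, \<tau>', d) \<omega> = (\<Sum>j=1..D. A d j * f (r, \<tau>, j) \<omega>) + q (r, d) \<omega>)"
    and z: "z \<in> Z" and d: "d \<in> {1..D}"
  shows "(\<integral>\<omega>. (f (r, \<tau>, 1) \<omega> - (\<Sum>z'\<in>Z. w z' * f (z', \<tau>, 1) \<omega>)) * f (z, \<tau>', d) \<omega> \<partial>M) = 0"
proof -
  interpret prob_space M by (rule ps)
  let ?K = "UNIV \<times> UNIV \<times> {1..D} :: ('x \<times> real \<times> nat) set"
  define E where "E \<omega> = f (r, \<tau>, 1) \<omega> - (\<Sum>z'\<in>Z. w z' * f (z', \<tau>, 1) \<omega>)" for \<omega>
  have D1': "1 \<in> {1..D}" using D1 by simp
  have linE: "lin f ?K E" unfolding E_def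
    by (intro lin_diff lin_sum fin lin_scale lin_base) (use D1 in auto)
  note LP = lin_props[OF ps jg m0[rule_format]]
  have linf: "lin f ?K (f i)" if "i \<in> ?K" for i using that by (rule lin_base)
  have mE[measurable]: "E \<in> borel_measurable M" and iE: "integrable M E" and sE: "integrable M (\<lambda>\<omega>. (E \<omega>)\<^sup>2)"
    and zE: "(\<integral>\<omega>. E \<omega> \<partial>M) = 0"
    using LP[OF _ linE] by auto
  have mf[measurable]: "f i \<in> borel_measurable M" if "i \<in> ?K" for i using LP(1)[OF _ linf[OF that]] by simp
  have sf: "integrable M (\<lambda>\<omega>. (f i \<omega>)\<^sup>2)" if "i \<in> ?K" for i using LP(3)[OF _ linf[OF that]] by simp
  have iff: "integrable M (\<lambda>\<omega>. f i \<omega> * f j \<omega>)" if "i \<in> ?K" "j \<in> ?K" for i j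
    by (rule sq_int_prod[OF sf[OF that(1)] sf[OF that(2)] mf[OF that(1)] mf[OF that(2)]])
  have cov: "(\<integral>\<omega>. f (a, \<tau>, 1) \<omega> * f (b, \<tau>, j) \<omega> \<partial>M) = \<kappa> a b * \<alpha> 1 j" if "j \<in> {1..D}" for a b j
    using gp D1' that unfolding zero_mean_GP_def by auto
  have step1: "(\<integral>\<omega>. E \<omega> * f (z, \<tau>, j) \<omega> \<partial>M) = 0" if j: "j \<in> {1..D}" for j
  proof -
    have "(\<integral>\<omega>. E \<omega> * f (z, \<tau>, j) \<omega> \<partial>M) =
          (\<integral>\<omega>. f (r, \<tau>, 1) \<omega> * f (z, \<tau>, j) \<omega> - (\<Sum>z'\<in>Z. w z' * (f (z', \<tau>, 1) \<omega> * f (z, \<tau>, j) \<omega>)) \<partial>M)"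
      unfolding E_def by (simp add: left_diff_distrib sum_distrib_right mult.assoc)
    also have "\<dots> = (\<integral>\<omega>. f (r, \<tau>, 1) \<omega> * f (z, \<tau>, j) \<omega> \<partial>M) - (\<Sum>z'\<in>Z. w z' * (\<integral>\<omega>. f (z', \<tau>, 1) \<omega> * f (z, \<tau>, j) \<omega> \<partial>M))"
    proof -
      have "(\<integral>\<omega>. (\<Sum>z'\<in>Z. w z' * (f (z', \<tau>, 1) \<omega> * f (z, \<tau>, j) \<omega>)) \<partial>M) =
            (\<Sum>z'\<in>Z. w z' * (\<integral>\<omega>. f (z', \<tau>, 1) \<omega> * f (z, \<tau>, j) \<omega> \<partial>M))"
        using j D1' by (subst Bochner_Integration.integral_sum) (auto intro!: integrable_mult_right iff)
      then show ?thesis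
        using j D1' by (subst Bochner_Integration.integral_diff) (auto intro!: iff Bochner_Integration.integrable_sum integrable_mult_right)
    qed
    also have "\<dots> = \<kappa> r z * \<alpha> 1 j - (\<Sum>z'\<in>Z. w z' * (\<kappa> z' z * \<alpha> 1 j))"
      by (simp only: cov[OF j])
    also have "\<dots> = \<alpha> 1 j * (\<kappa> r z - (\<Sum>z'\<in>Z. w z' * \<kappa> z' z))"
      by (simp add: algebra_simps sum_distrib_left sum_distrib_right)
    also have "\<dots> = 0" using wt z by simp
    finally show ?thesis .
  qed
  obtain A q where jq: "jointly_gaussian M (UNIV \<times> {1..D}) q"
    and iq: "indep_var (PiM (UNIV \<times> {1..D}) (\<lambda>_. borel)) (\<lambda>\<omega>. restrict (\<lambda>i. q i \<omega>) (UNIV \<times> {1..D}))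
                  (PiM (UNIV \<times> {1..D}) (\<lambda>_. borel)) (\<lambda>\<omega>. restrict (\<lambda>(r, d). f (r, \<tau>, d) \<omega>) (UNIV \<times> {1..D}))"
    and ae: "\<forall>r. \<forall>d\<in>{1..D}. AE \<omega> in M. f (r, \<tau>', d) \<omega> = (\<Sum>j=1..D. A d j * f (r, \<tau>, j) \<omega>) + q (r, d) \<omega>"
    using tr by blast
  have mq[measurable]: "q (z, d) \<in> borel_measurable M" using jq d unfolding jointly_gaussian_def by auto
  have ae1: "AE \<omega> in M. f (z, \<tau>', d) \<omega> = (\<Sum>j=1..D. A d j * f (z, \<tau>, j) \<omega>) + q (z, d) \<omega>"
    using ae d by blast
  have aez: "AE \<omega> in M. q (z, d) \<omega> = f (z, \<tau>', d) \<omega> - (\<Sum>j=1..D. A d j * f (z, \<tau>, j) \<omega>)"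
    using ae1 by eventually_elim linarith
  have iq1: "integrable M (q (z, d))"
  proof (rule integrable_cong_AE[THEN iffD2, OF _ _ aez])
    show "q (z, d) \<in> borel_measurable M" by simp
    show "(\<lambda>\<omega>. f (z, \<tau>', d) \<omega> - (\<Sum>j=1..D. A d j * f (z, \<tau>, j) \<omega>)) \<in> borel_measurable M"
      using d by (intro borel_measurable_diff borel_measurable_sum borel_measurable_times borel_measurable_const mf) auto
    show "integrable M (\<lambda>\<omega>. f (z, \<tau>', d) \<omega> - (\<Sum>j=1..D. A d j * f (z, \<tau>, j) \<omega>))"
      using d by (intro Bochner_Integration.integrable_diff Bochner_Integration.integrable_sum
          integrable_mult_right LP(2)[OF _ linf]) auto
  qed
  have indqE: "indep_var borel (q (z, d)) borel E"
  proof -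
    define Y2 where "Y2 v = v (r, 1) - (\<Sum>z'\<in>Z. w z' * v (z', 1))" for v :: "'x \<times> nat \<Rightarrow> real"
    have mY1: "(\<lambda>v. v (z, d)) \<in> borel_measurable (PiM (UNIV \<times> {1..D}) (\<lambda>_. borel))"
      using d by (intro measurable_component_singleton) auto
    have mY2: "Y2 \<in> borel_measurable (PiM (UNIV \<times> {1..D}) (\<lambda>_. borel))"
      unfolding Y2_def using D1'
      by (intro borel_measurable_diff borel_measurable_sum borel_measurable_times borel_measurable_const
          measurable_component_singleton) auto
    have "indep_var borel ((\<lambda>v. v (z, d)) \<circ> (\<lambda>\<omega>. restrict (\<lambda>i. q i \<omega>) (UNIV \<times> {1..D})))
            borel (Y2 \<circ> (\<lambda>\<omega>. restrict (\<lambda>(r, d). f (r, \<tau>, d) \<omega>) (UNIV \<times> {1..D})))"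
      by (rule indep_var_compose[OF iq mY1 mY2])
    moreover have "((\<lambda>v. v (z, d)) \<circ> (\<lambda>\<omega>. restrict (\<lambda>i. q i \<omega>) (UNIV \<times> {1..D}))) = q (z, d)"
      using d by (auto simp: fun_eq_iff)
    moreover have "(Y2 \<circ> (\<lambda>\<omega>. restrict (\<lambda>(r, d). f (r, \<tau>, d) \<omega>) (UNIV \<times> {1..D}))) = E"
      using D1' by (auto simp: fun_eq_iff Y2_def E_def)
    ultimately show ?thesis by simp
  qed
  have "(\<integral>\<omega>. q (z, d) \<omega> * E \<omega> \<partial>M) = (\<integral>\<omega>. q (z, d) \<omega> \<partial>M) * (\<integral>\<omega>. E \<omega> \<partial>M)"
    by (rule indep_var_lebesgue_integral[OF indqE iq1 iE])
  then have qE0: "(\<integral>\<omega>. E \<omega> * q (z, d) \<omega> \<partial>M) = 0" using zE by (simp add: mult.commute)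
  have iqE: "integrable M (\<lambda>\<omega>. E \<omega> * q (z, d) \<omega>)"
    using indep_var_integrable[OF indqE iq1 iE] by (simp add: mult.commute)
  have iEf: "integrable M (\<lambda>\<omega>. E \<omega> * f (z, \<tau>, j) \<omega>)" if "j \<in> {1..D}" for j
    using that by (intro sq_int_prod sE sf mE mf) auto
  have "(\<integral>\<omega>. E \<omega> * f (z, \<tau>', d) \<omega> \<partial>M) = (\<integral>\<omega>. (\<Sum>j=1..D. A d j * (E \<omega> * f (z, \<tau>, j) \<omega>)) + E \<omega> * q (z, d) \<omega> \<partial>M)"
  proof (rule integral_cong_AE)
    show "AE \<omega> in M. E \<omega> * f (z, \<tau>', d) \<omega> = (\<Sum>j=1..D. A d j * (E \<omega> * f (z, \<tau>, j) \<omega>)) + E \<omega> * q (z, d) \<omega>"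
      using ae1 by eventually_elim (simp add: distrib_left sum_distrib_left algebra_simps)
  qed (use d in auto)
  also have "\<dots> = (\<Sum>j=1..D. A d j * (\<integral>\<omega>. E \<omega> * f (z, \<tau>, j) \<omega> \<partial>M)) + (\<integral>\<omega>. E \<omega> * q (z, d) \<omega> \<partial>M)"
    by (subst Bochner_Integration.integral_add)
       (auto intro!: Bochner_Integration.integrable_sum integrable_mult_right iEf iqE simp: Bochner_Integration.integral_sum iEf)
  also have "\<dots> = 0" using step1 qE0 by simp
  finally show ?thesis unfolding E_def .
qed

lemma char_indep_sum:
  fixes c :: "nat \<Rightarrow> 'w \<Rightarrow> real"
  assumes ps: "prob_space M" and ind: "prob_space.indep_vars M (\<lambda>_. borel) c S"
  shows "(CLINT \<omega>|M. iexp (\<Sum>p\<in>S. c p \<omega>)) = (\<Prod>p\<in>S. CLINT \<omega>|M. iexp (c p \<omega>))"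
proof -
  interpret prob_space M by (rule ps)
  have mc[measurable]: "c p \<in> borel_measurable M" if "p \<in> S" for p
    using ind that unfolding indep_vars_def by auto
  have ms: "(\<lambda>\<omega>. \<Sum>p\<in>S. c p \<omega>) \<in> borel_measurable M"
    by (rule borel_measurable_sum) (rule mc)
  have "(CLINT \<omega>|M. iexp (\<Sum>p\<in>S. c p \<omega>)) = char (distr M borel (\<lambda>\<omega>. \<Sum>p\<in>S. c p \<omega>)) 1"
    unfolding char_def using ms by (subst integral_distr) auto
  also have "\<dots> = (\<Prod>p\<in>S. char (distr M borel (c p)) 1)"
    by (rule char_distr_sum[OF ind])
  also have "\<dots> = (\<Prod>p\<in>S. CLINT \<omega>|M. iexp (c p \<omega>))"
    unfolding char_def by (intro prod.cong refl) (subst integral_distr, auto)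
  finally show ?thesis .
qed

lemma char_factor:
  fixes a b :: "nat \<Rightarrow> 'w \<Rightarrow> real"
  assumes ps: "prob_space M"
    and ind_ab: "prob_space.indep_vars M (\<lambda>_. borel) (\<lambda>p \<omega>. a p \<omega> + b p \<omega>) S"
    and ind_a: "prob_space.indep_vars M (\<lambda>_. borel) a S"
    and ind_b: "prob_space.indep_vars M (\<lambda>_. borel) b S"
    and ga: "\<And>p. p \<in> S \<Longrightarrow> (CLINT \<omega>|M. iexp (a p \<omega>)) = complex_of_real (exp (- (\<integral>\<omega>. (a p \<omega>)\<^sup>2 \<partial>M) / 2))"
    and gb: "\<And>p. p \<in> S \<Longrightarrow> (CLINT \<omega>|M. iexp (b p \<omega>)) = complex_of_real (exp (- (\<integral>\<omega>. (b p \<omega>)\<^sup>2 \<partial>M) / 2))"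
    and gab: "\<And>p. p \<in> S \<Longrightarrow> (CLINT \<omega>|M. iexp (a p \<omega> + b p \<omega>)) = complex_of_real (exp (- (\<integral>\<omega>. (a p \<omega> + b p \<omega>)\<^sup>2 \<partial>M) / 2))"
    and sa: "\<And>p. p \<in> S \<Longrightarrow> integrable M (\<lambda>\<omega>. (a p \<omega>)\<^sup>2)"
    and sb: "\<And>p. p \<in> S \<Longrightarrow> integrable M (\<lambda>\<omega>. (b p \<omega>)\<^sup>2)"
    and ma: "\<And>p. p \<in> S \<Longrightarrow> a p \<in> borel_measurable M"
    and mb: "\<And>p. p \<in> S \<Longrightarrow> b p \<in> borel_measurable M"
    and orth: "\<And>p. p \<in> S \<Longrightarrow> (\<integral>\<omega>. a p \<omega> * b p \<omega> \<partial>M) = 0"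
  shows "(CLINT \<omega>|M. iexp (\<Sum>p\<in>S. a p \<omega> + b p \<omega>)) =
         (CLINT \<omega>|M. iexp (\<Sum>p\<in>S. a p \<omega>)) * (CLINT \<omega>|M. iexp (\<Sum>p\<in>S. b p \<omega>))"
proof -
  have each: "(CLINT \<omega>|M. iexp (a p \<omega> + b p \<omega>)) = (CLINT \<omega>|M. iexp (a p \<omega>)) * (CLINT \<omega>|M. iexp (b p \<omega>))"
    if p: "p \<in> S" for p
  proof -
    have iab: "integrable M (\<lambda>\<omega>. a p \<omega> * b p \<omega>)"
      by (rule sq_int_prod[OF sa sb ma mb]) (use p in auto)
    have "(\<integral>\<omega>. (a p \<omega> + b p \<omega>)\<^sup>2 \<partial>M) = (\<integral>\<omega>. (a p \<omega>)\<^sup>2 + (2 * (a p \<omega> * b p \<omega>) + (b p \<omega>)\<^sup>2) \<partial>M)"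
      by (simp add: power2_eq_square algebra_simps)
    also have "\<dots> = (\<integral>\<omega>. (a p \<omega>)\<^sup>2 \<partial>M) + (\<integral>\<omega>. (b p \<omega>)\<^sup>2 \<partial>M)"
      using p iab sa sb orth by (simp add: Bochner_Integration.integral_add)
    finally have "(\<integral>\<omega>. (a p \<omega> + b p \<omega>)\<^sup>2 \<partial>M) = (\<integral>\<omega>. (a p \<omega>)\<^sup>2 \<partial>M) + (\<integral>\<omega>. (b p \<omega>)\<^sup>2 \<partial>M)" .
    then show ?thesis
      using ga[OF p] gb[OF p] gab[OF p]
      by (simp add: of_real_mult[symmetric] exp_add[symmetric] add_divide_distrib[symmetric])
  qed
  have "(CLINT \<omega>|M. iexp (\<Sum>p\<in>S. a p \<omega> + b p \<omega>)) = (\<Prod>p\<in>S. CLINT \<omega>|M. iexp (a p \<omega> + b p \<omega>))"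
    by (rule char_indep_sum[OF ps ind_ab])
  also have "\<dots> = (\<Prod>p\<in>S. (CLINT \<omega>|M. iexp (a p \<omega>)) * (CLINT \<omega>|M. iexp (b p \<omega>)))"
    by (intro prod.cong refl each)
  also have "\<dots> = (\<Prod>p\<in>S. CLINT \<omega>|M. iexp (a p \<omega>)) * (\<Prod>p\<in>S. CLINT \<omega>|M. iexp (b p \<omega>))"
    by (rule prod.distrib)
  also have "\<dots> = (CLINT \<omega>|M. iexp (\<Sum>p\<in>S. a p \<omega>)) * (CLINT \<omega>|M. iexp (\<Sum>p\<in>S. b p \<omega>))"
    using char_indep_sum[OF ps ind_a] char_indep_sum[OF ps ind_b] by simp
  finally show ?thesis .
qed

lemma pair_char:
  fixes A B :: "'w \<Rightarrow> real"
  assumes ps: "prob_space M" and [measurable]: "A \<in> borel_measurable M" "B \<in> borel_measurable M"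
  shows "(CLINT p|M \<Otimes>\<^sub>M M. iexp (A (fst p) + B (snd p))) = (CLINT \<omega>|M. iexp (A \<omega>)) * (CLINT \<omega>|M. iexp (B \<omega>))"
proof -
  interpret prob_space M by (rule ps)
  interpret pp: pair_prob_space M M by unfold_locales
  have int: "integrable (M \<Otimes>\<^sub>M M) (case_prod (\<lambda>x y. iexp (A x + B y)))"
    by (rule pp.P.integrable_const_bound[where B=1]) (auto simp: case_prod_beta')
  have "(CLINT p|M \<Otimes>\<^sub>M M. iexp (A (fst p) + B (snd p))) = (CLINT y|M. (CLINT x|M. iexp (A x + B y)))"
    using pp.integral_snd[OF int] by (simp add: case_prod_beta')
  also have "\<dots> = (CLINT y|M. (CLINT x|M. iexp (A x)) * iexp (B y))"
    by (simp add: exp_add distrib_left)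
  also have "\<dots> = (CLINT \<omega>|M. iexp (A \<omega>)) * (CLINT \<omega>|M. iexp (B \<omega>))"
    by simp
  finally show ?thesis .
qed

lemma cos_sin_of_char:
  fixes X :: "'a \<Rightarrow> real"
  assumes "finite_measure \<mu>" "X \<in> borel_measurable \<mu>"
  shows "(\<integral>x. cos (X x) \<partial>\<mu>) = Re (CLINT x|\<mu>. iexp (X x))" "(\<integral>x. sin (X x) \<partial>\<mu>) = Im (CLINT x|\<mu>. iexp (X x))"
  using cint_split[OF assms(1) assms(2), of "\<lambda>_. 1" 1] by simp_all

lemma lin_indep:
  fixes f :: "nat \<Rightarrow> 'i \<Rightarrow> 'w \<Rightarrow> real" and g :: "nat \<Rightarrow> 'w \<Rightarrow> real"
  assumes ps: "prob_space M"
    and ind: "prob_space.indep_vars M (\<lambda>_. PiM K (\<lambda>_. borel)) (\<lambda>p \<omega>. restrict (\<lambda>i. f p i \<omega>) K) S"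
    and mf: "\<And>p i. p \<in> S \<Longrightarrow> i \<in> K \<Longrightarrow> f p i \<in> borel_measurable M"
    and lg: "\<And>p. p \<in> S \<Longrightarrow> lin (f p) K (g p)"
  shows "prob_space.indep_vars M (\<lambda>_. borel) g S"
proof -
  interpret prob_space M by (rule ps)
  have "\<forall>p\<in>S. \<exists>G\<in>borel_measurable (PiM K (\<lambda>_. borel)). \<forall>\<omega>. g p \<omega> = G (restrict (\<lambda>i. f p i \<omega>) K)"
    using lin_meas[OF mf lg] by blast
  then obtain G where G: "\<And>p. p \<in> S \<Longrightarrow> G p \<in> borel_measurable (PiM K (\<lambda>_. borel))"
    "\<And>p \<omega>. p \<in> S \<Longrightarrow> g p \<omega> = G p (restrict (\<lambda>i. f p i \<omega>) K)"
    by metis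
  have "indep_vars (\<lambda>_. borel) (\<lambda>p \<omega>. G p (restrict (\<lambda>i. f p i \<omega>) K)) S"
    by (rule indep_vars_compose2[OF ind G(1)])
  moreover have "indep_vars (\<lambda>_. borel) (\<lambda>p \<omega>. G p (restrict (\<lambda>i. f p i \<omega>) K)) S \<longleftrightarrow> indep_vars (\<lambda>_. borel) g S"
    by (intro indep_vars_cong) (auto simp: G(2) fun_eq_iff)
  ultimately show ?thesis by simp
qed

theorem theorem2:
  fixes M :: "'w measure"
    and D P :: nat
    and f :: "nat \<Rightarrow> 'x \<times> real \<times> nat \<Rightarrow> 'w \<Rightarrow> real"
    and T :: "real set"
    and Z :: "nat \<Rightarrow> 'x set"
    and Xs :: "real \<Rightarrow> 'x set"
  assumes "prob_space M"
    and "D \<ge> 1" and "P \<ge> 1"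
    and indep: "prob_space.indep_vars M (\<lambda>_. PiM (UNIV \<times> UNIV \<times> {1..D}) (\<lambda>_. borel))
                  (\<lambda>p \<omega>. restrict (\<lambda>i. f p i \<omega>) (UNIV \<times> UNIV \<times> {1..D})) {1..P}"
    and GP: "\<forall>p\<in>{1..P}. jointly_gaussian M (UNIV \<times> UNIV \<times> {1..D}) (f p) \<and>
                (\<forall>i\<in>UNIV \<times> UNIV \<times> {1..D}. integral\<^sup>L M (f p i) = 0)"
    and sep: "\<forall>p\<in>{1..P}. \<exists>\<kappa> :: 'x \<Rightarrow> 'x \<Rightarrow> real.
                is_kernel UNIV \<kappa> \<and> nondegenerate_kernel UNIV \<kappa> \<and>
                (\<forall>\<tau>. \<exists>\<alpha> :: nat \<Rightarrow> nat \<Rightarrow> real. is_kernel {1..D} \<alpha> \<and>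
                   zero_mean_GP M (UNIV \<times> {1..D}) (\<lambda>(r, d). f p (r, \<tau>, d))
                     (\<lambda>(r, d) (r', d'). \<kappa> r r' * \<alpha> d d'))"
    and trans: "\<forall>p\<in>{1..P}. \<forall>\<tau> \<tau>'. \<exists>(A :: nat \<Rightarrow> nat \<Rightarrow> real) (q :: 'x \<times> nat \<Rightarrow> 'w \<Rightarrow> real).
                jointly_gaussian M (UNIV \<times> {1..D}) q \<and>
                prob_space.indep_var M
                  (PiM (UNIV \<times> {1..D}) (\<lambda>_. borel)) (\<lambda>\<omega>. restrict (\<lambda>i. q i \<omega>) (UNIV \<times> {1..D}))
                  (PiM (UNIV \<times> {1..D}) (\<lambda>_. borel))
                  (\<lambda>\<omega>. restrict (\<lambda>(r, d). f p (r, \<tau>, d) \<omega>) (UNIV \<times> {1..D})) \<and>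
                (\<forall>r. \<forall>d\<in>{1..D}. AE \<omega> in M.
                   f p (r, \<tau>', d) \<omega> = (\<Sum>j=1..D. A d j * f p (r, \<tau>, j) \<omega>) + q (r, d) \<omega>)"
    and nondeg: "\<forall>p\<in>{1..P}. nondegenerate_kernel (UNIV \<times> UNIV \<times> {1..D}) (cov_kernel M (f p))"
    and "finite T"
    and "\<forall>p\<in>{1..P}. finite (Z p)"
    and "\<forall>\<tau>\<in>T. finite (Xs \<tau>)"
  shows "\<forall>\<tau>\<in>T. cond_indep M
           (gen_sigma M (Xs \<tau>) (\<lambda>r \<omega>. \<Sum>p\<in>{1..P}. f p (r, \<tau>, 1) \<omega>))
           (gen_sigma M {(p, r, \<tau>', d). p \<in> {1..P} \<and> r \<in> Z p \<and> \<tau>' \<in> T \<and> d \<in> {1..D} \<and>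
                                     \<not> (\<tau>' = \<tau> \<and> d = 1)}
              (\<lambda>(p, i) \<omega>. f p i \<omega>))
           (gen_sigma M {(p, r). p \<in> {1..P} \<and> r \<in> Z p} (\<lambda>(p, r) \<omega>. f p (r, \<tau>, 1) \<omega>))"
proof
  fix \<tau> assume \<tau>T: "\<tau> \<in> T"
  note ps = assms(1)
  interpret prob_space M by (rule ps)
  define K where "K = (UNIV \<times> UNIV \<times> {1..D} :: ('x \<times> real \<times> nat) set)"
  have D1': "(1::nat) \<in> {1..D}" using assms(2) by simp
  have finT: "finite T" using assms by simp
  have finZ: "\<And>p. p \<in> {1..P} \<Longrightarrow> finite (Z p)" using assms by simp
  have finX: "finite (Xs \<tau>)" using assms \<tau>T by simp
  have jg: "\<And>p. p \<in> {1..P} \<Longrightarrow> jointly_gaussian M K (f p)" using GP unfolding K_def by auto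
  have m0: "\<And>p i. p \<in> {1..P} \<Longrightarrow> i \<in> K \<Longrightarrow> integral\<^sup>L M (f p i) = 0" using GP unfolding K_def by auto
  have mf: "\<And>p i. p \<in> {1..P} \<Longrightarrow> i \<in> K \<Longrightarrow> f p i \<in> borel_measurable M"
    using jg unfolding jointly_gaussian_def by auto
  have LP: "g \<in> borel_measurable M" "integrable M g" "integrable M (\<lambda>\<omega>. (g \<omega>)\<^sup>2)" "(\<integral>\<omega>. g \<omega> \<partial>M) = 0"
    "(CLINT \<omega>|M. iexp (s * g \<omega>)) = complex_of_real (exp (- (s\<^sup>2 * (\<integral>\<omega>. (g \<omega>)\<^sup>2 \<partial>M)) / 2))"
    if "p \<in> {1..P}" "lin (f p) K g" for p g s
    using lin_props[OF ps jg[OF that(1)] m0[OF that(1)] that(2)] by auto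
  have "\<forall>p\<in>{1..P}. \<exists>\<kappa>. nondegenerate_kernel UNIV \<kappa> \<and> (\<exists>\<alpha>. zero_mean_GP M (UNIV \<times> {1..D}) (\<lambda>(r, d). f p (r, \<tau>, d)) (\<lambda>(r, d) (r', d'). \<kappa> r r' * \<alpha> d d'))"
    using sep by blast
  then obtain \<kappa> where \<kappa>: "\<And>p. p \<in> {1..P} \<Longrightarrow> nondegenerate_kernel UNIV (\<kappa> p)"
    and \<kappa>2: "\<And>p. p \<in> {1..P} \<Longrightarrow> \<exists>\<alpha>. zero_mean_GP M (UNIV \<times> {1..D}) (\<lambda>(r, d). f p (r, \<tau>, d)) (\<lambda>(r, d) (r', d'). \<kappa> p r r' * \<alpha> d d')"
    by metis
  obtain \<alpha> where \<alpha>: "\<And>p. p \<in> {1..P} \<Longrightarrow> zero_mean_GP M (UNIV \<times> {1..D}) (\<lambda>(r, d). f p (r, \<tau>, d)) (\<lambda>(r, d) (r', d'). \<kappa> p r r' * \<alpha> p d d')"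
    using \<kappa>2 by metis
  have "\<forall>pr. \<exists>v. fst pr \<in> {1..P} \<longrightarrow> (\<forall>z\<in>Z (fst pr). (\<Sum>z'\<in>Z (fst pr). v z' * \<kappa> (fst pr) z' z) = \<kappa> (fst pr) (snd pr) z)"
    using proj_weights[OF \<kappa> finZ] by blast
  then obtain Wt where Wt: "\<And>pr. fst pr \<in> {1..P} \<Longrightarrow> (\<forall>z\<in>Z (fst pr). (\<Sum>z'\<in>Z (fst pr). Wt pr z' * \<kappa> (fst pr) z' z) = \<kappa> (fst pr) (snd pr) z)"
    by metis
  define w where "w p r = Wt (p, r)" for p r
  have wt: "\<And>p r. p \<in> {1..P} \<Longrightarrow> \<forall>z\<in>Z p. (\<Sum>z'\<in>Z p. w p r z' * \<kappa> p z' z) = \<kappa> p r z"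
    unfolding w_def using Wt by force
  define ep where "ep p r \<omega> = f p (r, \<tau>, 1) \<omega> - (\<Sum>z\<in>Z p. w p r z * f p (z, \<tau>, 1) \<omega>)" for p r \<omega>
  define e where "e r \<omega> = (\<Sum>p\<in>{1..P}. ep p r \<omega>)" for r \<omega>
  define WW where "WW = (SIGMA p:{1..P}. Z p \<times> T \<times> {1..D})"
  define ZZ where "ZZ = {(p, r). p \<in> {1..P} \<and> r \<in> Z p}"
  define YY where "YY = {(p, r, \<tau>', d). p \<in> {1..P} \<and> r \<in> Z p \<and> \<tau>' \<in> T \<and> d \<in> {1..D} \<and> \<not> (\<tau>' = \<tau> \<and> d = 1)}"
  define KK where "KK = Inl ` Xs \<tau> \<union> Inr ` WW"
  define Wf where "Wf = (\<lambda>(p, i) \<omega>. f p i \<omega>)"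
  define V where "V k \<omega> = (case k of Inl r \<Rightarrow> e r \<omega> | Inr j \<Rightarrow> Wf j \<omega>)" for k \<omega>
  define V' where "V' k x = (case k of Inl r \<Rightarrow> e r (fst x) | Inr j \<Rightarrow> Wf j (snd x))" for k x
  have finWW: "finite WW" unfolding WW_def using finZ finT by (auto intro!: finite_SigmaI)
  have finKK: "finite KK" unfolding KK_def using finWW finX by auto
  have WWK: "\<And>p i. (p, i) \<in> WW \<Longrightarrow> p \<in> {1..P} \<and> i \<in> K" unfolding WW_def K_def by auto
  have linep: "\<And>p r. p \<in> {1..P} \<Longrightarrow> lin (f p) K (ep p r)"
    unfolding ep_def using D1'
    by (intro lin_diff lin_sum lin_scale lin_base finZ) (auto simp: K_def)
  have mep: "\<And>p r. p \<in> {1..P} \<Longrightarrow> ep p r \<in> borel_measurable M" using LP(1)[OF _ linep] by blast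
  have me: "\<And>r. e r \<in> borel_measurable M"
    unfolding e_def by (rule borel_measurable_sum) (rule mep)
  have mWf: "\<And>j. j \<in> WW \<Longrightarrow> Wf j \<in> borel_measurable M"
    unfolding Wf_def using WWK mf by auto
  have mV: "\<And>k. k \<in> KK \<Longrightarrow> V k \<in> borel_measurable M"
    unfolding KK_def V_def using me mWf by auto
  have mV': "\<And>k. k \<in> KK \<Longrightarrow> V' k \<in> borel_measurable (M \<Otimes>\<^sub>M M)"
    unfolding KK_def V'_def
    using measurable_compose[OF measurable_fst me] measurable_compose[OF measurable_snd mWf] by auto
  have pps: "prob_space (M \<Otimes>\<^sub>M M)" by (intro prob_space_pair ps)
  have fm1: "finite_measure M" using ps unfolding prob_space_def by blast
  have fm2: "finite_measure (M \<Otimes>\<^sub>M M)" using pps unfolding prob_space_def by blast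
  have cov: "(\<integral>\<omega>. ep p r \<omega> * f p j \<omega> \<partial>M) = 0" if p: "p \<in> {1..P}" and j: "j \<in> Z p \<times> T \<times> {1..D}" for p r j
  proof -
    obtain z \<tau>' d where jj: "j = (z, \<tau>', d)" "z \<in> Z p" "d \<in> {1..D}" using j by auto
    have jg': "jointly_gaussian M (UNIV \<times> UNIV \<times> {1..D}) (f p)" using GP p by auto
    have m0': "\<forall>i\<in>UNIV \<times> UNIV \<times> {1..D}. integral\<^sup>L M (f p i) = 0" using GP p by auto
    have trp: "\<exists>(A :: nat \<Rightarrow> nat \<Rightarrow> real) (q :: 'x \<times> nat \<Rightarrow> 'w \<Rightarrow> real).
                jointly_gaussian M (UNIV \<times> {1..D}) q \<and>
                prob_space.indep_var M
                  (PiM (UNIV \<times> {1..D}) (\<lambda>_. borel)) (\<lambda>\<omega>. restrict (\<lambda>i. q i \<omega>) (UNIV \<times> {1..D}))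
                  (PiM (UNIV \<times> {1..D}) (\<lambda>_. borel))
                  (\<lambda>\<omega>. restrict (\<lambda>(r, d). f p (r, \<tau>, d) \<omega>) (UNIV \<times> {1..D})) \<and>
                (\<forall>r. \<forall>d\<in>{1..D}. AE \<omega> in M.
                   f p (r, \<tau>', d) \<omega> = (\<Sum>j=1..D. A d j * f p (r, \<tau>, j) \<omega>) + q (r, d) \<omega>)"
      using trans p by blast
    have "(\<integral>\<omega>. (f p (r, \<tau>, 1) \<omega> - (\<Sum>z'\<in>Z p. w p r z' * f p (z', \<tau>, 1) \<omega>)) * f p (z, \<tau>', d) \<omega> \<partial>M) = 0"
      by (rule cov_zero[OF ps assms(2) jg' m0' \<alpha>[OF p] finZ[OF p] wt[OF p] trp jj(2) jj(3)])
    then show ?thesis by (simp add: ep_def jj(1))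
  qed
  have chareq: "(\<integral>\<omega>. cos (\<Sum>k\<in>KK. t k * V k \<omega>) \<partial>M) = (\<integral>x. cos (\<Sum>k\<in>KK. t k * V' k x) \<partial>(M \<Otimes>\<^sub>M M)) \<and>
                (\<integral>\<omega>. sin (\<Sum>k\<in>KK. t k * V k \<omega>) \<partial>M) = (\<integral>x. sin (\<Sum>k\<in>KK. t k * V' k x) \<partial>(M \<Otimes>\<^sub>M M))" for t
  proof -
    define a where "a p \<omega> = (\<Sum>r\<in>Xs \<tau>. t (Inl r) * ep p r \<omega>)" for p \<omega>
    define b where "b p \<omega> = (\<Sum>j\<in>Z p \<times> T \<times> {1..D}. t (Inr (p, j)) * f p j \<omega>)" for p \<omega>
    have la: "lin (f p) K (a p)" if "p \<in> {1..P}" for p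
      unfolding a_def by (intro lin_sum finX lin_scale linep that)
    have lb: "lin (f p) K (b p)" if "p \<in> {1..P}" for p
      unfolding b_def using that finZ finT by (intro lin_sum lin_scale lin_base) (auto simp: K_def)
    have lab: "lin (f p) K (\<lambda>\<omega>. a p \<omega> + b p \<omega>)" if "p \<in> {1..P}" for p
      using lin_add[OF la[OF that] lb[OF that]] .
    have split: "(\<Sum>k\<in>KK. t k * F k) = (\<Sum>r\<in>Xs \<tau>. t (Inl r) * F (Inl r)) + (\<Sum>j\<in>WW. t (Inr j) * F (Inr j))" for F :: "_ \<Rightarrow> real"
    proof -
      have "(\<Sum>k\<in>KK. t k * F k) = (\<Sum>k\<in>Inl ` Xs \<tau>. t k * F k) + (\<Sum>k\<in>Inr ` WW. t k * F k)"
        unfolding KK_def using finX finWW by (intro sum.union_disjoint) auto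
      also have "(\<Sum>k\<in>Inl ` Xs \<tau>. t k * F k) = (\<Sum>r\<in>Xs \<tau>. t (Inl r) * F (Inl r))"
        by (subst sum.reindex) (auto simp: inj_on_def)
      also have "(\<Sum>k\<in>Inr ` WW. t k * F k) = (\<Sum>j\<in>WW. t (Inr j) * F (Inr j))"
        by (subst sum.reindex) (auto simp: inj_on_def)
      finally show ?thesis .
    qed
    have s1: "(\<Sum>r\<in>Xs \<tau>. t (Inl r) * e r \<omega>) = (\<Sum>p\<in>{1..P}. a p \<omega>)" for \<omega>
      unfolding e_def a_def by (simp add: sum_distrib_left) (rule sum.swap)
    have s2: "(\<Sum>j\<in>WW. t (Inr j) * Wf j \<omega>) = (\<Sum>p\<in>{1..P}. b p \<omega>)" for \<omega>
    proof -
      have "(\<Sum>p\<in>{1..P}. b p \<omega>) = (\<Sum>(p, j)\<in>WW. t (Inr (p, j)) * f p j \<omega>)"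
        unfolding b_def WW_def using finZ finT by (subst sum.Sigma) auto
      also have "\<dots> = (\<Sum>j\<in>WW. t (Inr j) * Wf j \<omega>)"
        unfolding Wf_def by (intro sum.cong refl) auto
      finally show ?thesis by simp
    qed
    have sumV: "(\<Sum>k\<in>KK. t k * V k \<omega>) = (\<Sum>p\<in>{1..P}. a p \<omega> + b p \<omega>)" for \<omega>
      using split[of "\<lambda>k. V k \<omega>"] s1 s2 by (simp add: V_def sum.distrib)
    have sumV': "(\<Sum>k\<in>KK. t k * V' k x) = (\<Sum>p\<in>{1..P}. a p (fst x)) + (\<Sum>p\<in>{1..P}. b p (snd x))" for x
      using split[of "\<lambda>k. V' k x"] s1 s2 by (simp add: V'_def)
    have ma: "a p \<in> borel_measurable M" "integrable M (\<lambda>\<omega>. (a p \<omega>)\<^sup>2)" if "p \<in> {1..P}" for p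
      using LP[OF that la[OF that]] by auto
    have mb: "b p \<in> borel_measurable M" "integrable M (\<lambda>\<omega>. (b p \<omega>)\<^sup>2)" if "p \<in> {1..P}" for p
      using LP[OF that lb[OF that]] by auto
    have indK: "indep_vars (\<lambda>_. PiM K (\<lambda>_. borel)) (\<lambda>p \<omega>. restrict (\<lambda>i. f p i \<omega>) K) {1..P}"
      using indep unfolding K_def .
    have orth: "(\<integral>\<omega>. a p \<omega> * b p \<omega> \<partial>M) = 0" if p: "p \<in> {1..P}" for p
    proof -
      have ij: "integrable M (\<lambda>\<omega>. ep p r \<omega> * f p j \<omega>)" if "j \<in> Z p \<times> T \<times> {1..D}" for r j
      proof (rule sq_int_prod)
        have jK: "j \<in> K" using that by (auto simp: K_def)
        show "integrable M (\<lambda>\<omega>. (ep p r \<omega>)\<^sup>2)" "ep p r \<in> borel_measurable M"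
          using LP[OF p linep[OF p]] by auto
        show "integrable M (\<lambda>\<omega>. (f p j \<omega>)\<^sup>2)" "f p j \<in> borel_measurable M"
          using LP[OF p lin_base[OF jK]] by auto
      qed
      have "(\<integral>\<omega>. a p \<omega> * b p \<omega> \<partial>M) =
            (\<integral>\<omega>. (\<Sum>r\<in>Xs \<tau>. \<Sum>j\<in>Z p \<times> T \<times> {1..D}. (t (Inl r) * t (Inr (p, j))) * (ep p r \<omega> * f p j \<omega>)) \<partial>M)"
        unfolding a_def b_def sum_product by (simp add: algebra_simps)
      also have "\<dots> = (\<Sum>r\<in>Xs \<tau>. \<Sum>j\<in>Z p \<times> T \<times> {1..D}. (t (Inl r) * t (Inr (p, j))) * (\<integral>\<omega>. ep p r \<omega> * f p j \<omega> \<partial>M))"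
        using ij by (simp add: Bochner_Integration.integral_sum Bochner_Integration.integrable_sum)
      also have "\<dots> = 0" using cov[OF p] by simp
      finally show ?thesis .
    qed
    have CE: "(CLINT \<omega>|M. iexp (\<Sum>p\<in>{1..P}. a p \<omega> + b p \<omega>)) =
              (CLINT \<omega>|M. iexp (\<Sum>p\<in>{1..P}. a p \<omega>)) * (CLINT \<omega>|M. iexp (\<Sum>p\<in>{1..P}. b p \<omega>))"
    proof (rule char_factor[OF ps])
      show "indep_vars (\<lambda>_. borel) (\<lambda>p \<omega>. a p \<omega> + b p \<omega>) {1..P}"
        by (rule lin_indep[OF ps indK mf lab])
      show "indep_vars (\<lambda>_. borel) a {1..P}" by (rule lin_indep[OF ps indK mf la])
      show "indep_vars (\<lambda>_. borel) b {1..P}" by (rule lin_indep[OF ps indK mf lb])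
      show "(CLINT \<omega>|M. iexp (a p \<omega>)) = complex_of_real (exp (- (\<integral>\<omega>. (a p \<omega>)\<^sup>2 \<partial>M) / 2))" if "p \<in> {1..P}" for p
        using LP(5)[OF that la[OF that], of 1] by simp
      show "(CLINT \<omega>|M. iexp (b p \<omega>)) = complex_of_real (exp (- (\<integral>\<omega>. (b p \<omega>)\<^sup>2 \<partial>M) / 2))" if "p \<in> {1..P}" for p
        using LP(5)[OF that lb[OF that], of 1] by simp
      show "(CLINT \<omega>|M. iexp (a p \<omega> + b p \<omega>)) = complex_of_real (exp (- (\<integral>\<omega>. (a p \<omega> + b p \<omega>)\<^sup>2 \<partial>M) / 2))" if "p \<in> {1..P}" for p
        using LP(5)[OF that lab[OF that], of 1] by simp
    qed (use ma mb orth in auto)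
    have CP: "(CLINT x|M \<Otimes>\<^sub>M M. iexp ((\<Sum>p\<in>{1..P}. a p (fst x)) + (\<Sum>p\<in>{1..P}. b p (snd x)))) =
              (CLINT \<omega>|M. iexp (\<Sum>p\<in>{1..P}. a p \<omega>)) * (CLINT \<omega>|M. iexp (\<Sum>p\<in>{1..P}. b p \<omega>))"
      by (rule pair_char[OF ps]) (use ma mb in \<open>auto intro!: borel_measurable_sum\<close>)
    have CC: "(CLINT \<omega>|M. iexp (\<Sum>k\<in>KK. t k * V k \<omega>)) = (CLINT x|M \<Otimes>\<^sub>M M. iexp (\<Sum>k\<in>KK. t k * V' k x))"
      unfolding sumV sumV' CE CP ..
    have mS: "(\<lambda>\<omega>. \<Sum>k\<in>KK. t k * V k \<omega>) \<in> borel_measurable M"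
      using mV by (intro borel_measurable_sum borel_measurable_times borel_measurable_const) auto
    have mS': "(\<lambda>x. \<Sum>k\<in>KK. t k * V' k x) \<in> borel_measurable (M \<Otimes>\<^sub>M M)"
      using mV' by (intro borel_measurable_sum borel_measurable_times borel_measurable_const) auto
    show ?thesis
      using cos_sin_of_char[OF fm1 mS] cos_sin_of_char[OF fm2 mS'] CC by simp
  qed
  have rect: "measure M {\<omega>\<in>space M. \<forall>k\<in>KK. V k \<omega> \<in> A k} = measure (M \<Otimes>\<^sub>M M) {x\<in>space (M \<Otimes>\<^sub>M M). \<forall>k\<in>KK. V' k x \<in> A k}"
    if "\<forall>k\<in>KK. A k \<in> sets borel" for A
    by (rule rect_unique[OF finKK fm1 fm2]) (use mV mV' chareq that in auto)
  have law: "distr M (PiM KK (\<lambda>_. borel)) (\<lambda>\<omega>. restrict (\<lambda>k. V k \<omega>) KK) =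
             distr (M \<Otimes>\<^sub>M M) (PiM KK (\<lambda>_. borel)) (\<lambda>x. restrict (\<lambda>k. V' k x) KK)"
    by (rule PiM_law_eq[OF finKK fm1 fm2 mV mV' rect]) auto
  show "cond_indep M
           (gen_sigma M (Xs \<tau>) (\<lambda>r \<omega>. \<Sum>p\<in>{1..P}. f p (r, \<tau>, 1) \<omega>))
           (gen_sigma M {(p, r, \<tau>', d). p \<in> {1..P} \<and> r \<in> Z p \<and> \<tau>' \<in> T \<and> d \<in> {1..D} \<and>
                                     \<not> (\<tau>' = \<tau> \<and> d = 1)}
              (\<lambda>(p, i) \<omega>. f p i \<omega>))
           (gen_sigma M {(p, r). p \<in> {1..P} \<and> r \<in> Z p} (\<lambda>(p, r) \<omega>. f p (r, \<tau>, 1) \<omega>))"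
  proof -
    define N1 where "N1 = PiM (Xs \<tau>) (\<lambda>_. borel :: real measure)"
    define N2 where "N2 = PiM WW (\<lambda>_. borel :: real measure)"
    define N3 where "N3 = PiM ZZ (\<lambda>_. borel :: real measure)"
    define N4 where "N4 = PiM YY (\<lambda>_. borel :: real measure)"
    define ev where "ev \<omega> = restrict (\<lambda>r. e r \<omega>) (Xs \<tau>)" for \<omega>
    define wv where "wv \<omega> = restrict (\<lambda>j. Wf j \<omega>) WW" for \<omega>
    define zf where "zf v = restrict (\<lambda>j. v (fst j, snd j, \<tau>, 1)) ZZ" for v :: "nat \<times> 'x \<times> real \<times> nat \<Rightarrow> real"
    define yf where "yf v = restrict v YY" for v :: "nat \<times> 'x \<times> real \<times> nat \<Rightarrow> real"
    define \<Phi> where "\<Phi> a zv = restrict (\<lambda>r. a r + (\<Sum>p\<in>{1..P}. \<Sum>z\<in>Z p. w p r z * zv (p, z))) (Xs \<tau>)"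
      for a :: "'x \<Rightarrow> real" and zv :: "nat \<times> 'x \<Rightarrow> real"
    have ZZW: "(fst j, snd j, \<tau>, 1) \<in> WW" if "j \<in> ZZ" for j
      using that \<tau>T D1' unfolding ZZ_def WW_def by auto
    have YYW: "YY \<subseteq> WW" unfolding YY_def WW_def by auto
    have mev: "ev \<in> measurable M N1"
      unfolding ev_def N1_def by (rule measurable_restrict) (rule me)
    have mwv: "wv \<in> measurable M N2"
      unfolding wv_def N2_def by (rule measurable_restrict) (rule mWf)
    have mzf: "zf \<in> measurable N2 N3"
      unfolding zf_def N2_def N3_def
      by (rule measurable_restrict) (rule measurable_component_singleton, rule ZZW)
    have myf: "yf \<in> measurable N2 N4"
      unfolding yf_def N2_def N4_def
      by (rule measurable_restrict) (rule measurable_component_singleton, use YYW in auto)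
    have m\<Phi>: "(\<lambda>p. \<Phi> (fst p) (snd p)) \<in> measurable (N1 \<Otimes>\<^sub>M N3) (PiM (Xs \<tau>) (\<lambda>_. borel))"
      unfolding \<Phi>_def
    proof (rule measurable_restrict)
      fix r assume r: "r \<in> Xs \<tau>"
      have c1: "(\<lambda>p. fst p r) \<in> borel_measurable (N1 \<Otimes>\<^sub>M N3)"
        unfolding N1_def using r by (intro measurable_compose[OF measurable_fst] measurable_component_singleton)
      have c2: "(\<lambda>p. snd p (q, z)) \<in> borel_measurable (N1 \<Otimes>\<^sub>M N3)" if "q \<in> {1..P}" "z \<in> Z q" for q z
        unfolding N3_def using that
        by (intro measurable_compose[OF measurable_snd] measurable_component_singleton) (auto simp: ZZ_def)
      show "(\<lambda>p. fst p r + (\<Sum>q\<in>{1..P}. \<Sum>z\<in>Z q. w q r z * snd p (q, z))) \<in> borel_measurable (N1 \<Otimes>\<^sub>M N3)"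
        using c1 c2 by (intro borel_measurable_add borel_measurable_sum borel_measurable_times borel_measurable_const) auto
    qed
    have ind: "distr M (N1 \<Otimes>\<^sub>M N2) (\<lambda>\<omega>. (ev \<omega>, wv \<omega>)) =
               distr (M \<Otimes>\<^sub>M M) (N1 \<Otimes>\<^sub>M N2) (\<lambda>p. (ev (fst p), wv (snd p)))"
    proof -
      define sp where "sp v = (restrict (\<lambda>r. v (Inl r)) (Xs \<tau>), restrict (\<lambda>j. v (Inr j)) WW)"
        for v :: "'x + (nat \<times> 'x \<times> real \<times> nat) \<Rightarrow> real"
      have msp: "sp \<in> measurable (PiM KK (\<lambda>_. borel)) (N1 \<Otimes>\<^sub>M N2)"
        unfolding sp_def N1_def N2_def
        by (intro measurable_Pair measurable_restrict measurable_component_singleton) (auto simp: KK_def)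
      have m1: "(\<lambda>\<omega>. restrict (\<lambda>k. V k \<omega>) KK) \<in> measurable M (PiM KK (\<lambda>_. borel))"
        by (rule measurable_restrict) (rule mV)
      have m2: "(\<lambda>x. restrict (\<lambda>k. V' k x) KK) \<in> measurable (M \<Otimes>\<^sub>M M) (PiM KK (\<lambda>_. borel))"
        by (rule measurable_restrict) (rule mV')
      have e1: "(\<lambda>\<omega>. (ev \<omega>, wv \<omega>)) = sp \<circ> (\<lambda>\<omega>. restrict (\<lambda>k. V k \<omega>) KK)"
        unfolding sp_def ev_def wv_def by (auto simp: fun_eq_iff KK_def V_def)
      have e2: "(\<lambda>p. (ev (fst p), wv (snd p))) = sp \<circ> (\<lambda>x. restrict (\<lambda>k. V' k x) KK)"
        unfolding sp_def ev_def wv_def by (auto simp: fun_eq_iff KK_def V'_def)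
      show ?thesis
        unfolding e1 e2 distr_distr[OF msp m1, symmetric] distr_distr[OF msp m2, symmetric] law ..
    qed
    have CI: "cond_indep M (vimage_algebra (space M) (\<lambda>\<omega>. \<Phi> (ev \<omega>) (zf (wv \<omega>))) (PiM (Xs \<tau>) (\<lambda>_. borel)))
                (vimage_algebra (space M) (\<lambda>\<omega>. yf (wv \<omega>)) N4) (vimage_algebra (space M) (\<lambda>\<omega>. zf (wv \<omega>)) N3)"
      by (rule freeze_cond_indep[OF ps mev mwv mzf myf m\<Phi> ind])
    have gF: "gen_sigma M (Xs \<tau>) (\<lambda>r \<omega>. \<Sum>p\<in>{1..P}. f p (r, \<tau>, 1) \<omega>) =
              vimage_algebra (space M) (\<lambda>\<omega>. \<Phi> (ev \<omega>) (zf (wv \<omega>))) (PiM (Xs \<tau>) (\<lambda>_. borel))"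
      unfolding gen_sigma_def
    proof (rule arg_cong[where f="\<lambda>h. vimage_algebra (space M) h (PiM (Xs \<tau>) (\<lambda>_. borel))"], intro ext)
      fix \<omega> j
      have zz: "(\<Sum>p\<in>{1..P}. \<Sum>z\<in>Z p. w p j z * zf (wv \<omega>) (p, z)) = (\<Sum>p\<in>{1..P}. \<Sum>z\<in>Z p. w p j z * f p (z, \<tau>, 1) \<omega>)"
        by (intro sum.cong refl) (use \<tau>T D1' in \<open>auto simp: zf_def wv_def ZZ_def Wf_def WW_def\<close>)
      show "restrict (\<lambda>j. \<Sum>p\<in>{1..P}. f p (j, \<tau>, 1) \<omega>) (Xs \<tau>) j = \<Phi> (ev \<omega>) (zf (wv \<omega>)) j"
      proof (cases "j \<in> Xs \<tau>")
        case True
        then show ?thesis using zz by (simp add: \<Phi>_def ev_def e_def ep_def sum_subtractf)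
      next
        case False
        then show ?thesis by (simp add: \<Phi>_def)
      qed
    qed
    have gG: "gen_sigma M {(p, r, \<tau>', d). p \<in> {1..P} \<and> r \<in> Z p \<and> \<tau>' \<in> T \<and> d \<in> {1..D} \<and> \<not> (\<tau>' = \<tau> \<and> d = 1)}
                (\<lambda>(p, i) \<omega>. f p i \<omega>) = vimage_algebra (space M) (\<lambda>\<omega>. yf (wv \<omega>)) N4"
      unfolding gen_sigma_def YY_def[symmetric] N4_def
    proof (rule arg_cong[where f="\<lambda>h. vimage_algebra (space M) h (PiM YY (\<lambda>_. borel))"], intro ext)
      fix \<omega> j
      show "restrict (\<lambda>j. (\<lambda>(p, i) \<omega>. f p i \<omega>) j \<omega>) YY j = yf (wv \<omega>) j"
        using YYW by (auto simp: yf_def wv_def Wf_def)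
    qed
    have gH: "gen_sigma M {(p, r). p \<in> {1..P} \<and> r \<in> Z p} (\<lambda>(p, r) \<omega>. f p (r, \<tau>, 1) \<omega>) =
              vimage_algebra (space M) (\<lambda>\<omega>. zf (wv \<omega>)) N3"
      unfolding gen_sigma_def ZZ_def[symmetric] N3_def
    proof (rule arg_cong[where f="\<lambda>h. vimage_algebra (space M) h (PiM ZZ (\<lambda>_. borel))"], intro ext)
      fix \<omega> j
      show "restrict (\<lambda>j. (\<lambda>(p, r) \<omega>. f p (r, \<tau>, 1) \<omega>) j \<omega>) ZZ j = zf (wv \<omega>) j"
        using ZZW by (auto simp: zf_def wv_def Wf_def split_beta)
    qed
    show ?thesis unfolding gF gG gH by (rule CI)
  qed
qed

end
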